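(* Let $n\ge1$, $\gamma\in[0,1]$ and $\beta=\frac{2}{2-\gamma}$. Then for every $R>0$ there exists a function $U\in C([R,\infty))\cap C^2((R,\infty))$, positive and increasing on $(R,\infty)$, such that $$U''+\Big(\frac{n-1}{r}+\frac r2\Big)U'-\frac\beta2U=\gamma U^{\gamma-1}\ \text{ in }(R,\infty),\qquad U(R)=0,\qquad (U^{1/\beta})'(R)=\frac{\sqrt2}{\beta},$$ and $$\lim_{r\to\infty}\frac{U(r)}{r^\beta}=c\quad\text{for some }c>0.$$
   Context: $(U^{1/\beta})'(R)$ denotes the right derivative at $R$, i.e. $\lim_{r\downarrow R}U^{1/\beta}(r)/(r-R)$. For $\gamma=0$ the right-hand side $\gamma U^{\gamma-1}$ is $0$. *)

theory Defs
  imports "HOL-Analysis.Analysis"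
begin

end

theory Submission
  imports Defs "HOL-Analysis.Analysis" "HOL-Real_Asymp.Real_Asymp"
begin

lemma mono_bdd_tendsto:
  fixes f :: "real \<Rightarrow> real"
  assumes mono: "\<And>x y. a \<le> x \<Longrightarrow> x \<le> y \<Longrightarrow> f x \<le> f y"
    and bdd: "\<And>x. a \<le> x \<Longrightarrow> f x \<le> B"
  shows "\<exists>L. (f \<longlongrightarrow> L) at_top \<and> f a \<le> L"
proof -
  define L where "L = Sup (f ` {a..})"
  have bdd': "bdd_above (f ` {a..})" using bdd by (auto intro!: bdd_aboveI)
  have le: "f x \<le> L" if "a \<le> x" for x
    unfolding L_def using bdd' that by (intro cSup_upper) auto
  have "(f \<longlongrightarrow> L) at_top"
  proof (rule order_tendstoI)
    fix y assume "y < L"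
    then obtain x where x: "x \<in> {a..}" "y < f x"
      unfolding L_def using less_cSup_iff[of "f ` {a..}" y] bdd' by auto
    show "\<forall>\<^sub>F t in at_top. y < f t"
      using eventually_ge_at_top[of x] by eventually_elim (use x mono in force)
  next
    fix y assume "L < y"
    show "\<forall>\<^sub>F t in at_top. f t < y"
      using eventually_ge_at_top[of a] by eventually_elim (use le \<open>L < y\<close> in force)
  qed
  then show ?thesis using le by auto
qed


lemma asym:
  fixes U U' U'' :: "real \<Rightarrow> real" and n :: nat and \<beta> \<gamma> R :: real
  assumes R: "R > 0" and \<beta>: "\<beta> \<ge> 1" and \<gamma>0: "0 \<le> \<gamma>" and \<gamma>1: "\<gamma> \<le> 1" and n: "n \<ge> 1"
    and d1: "\<And>r. r > R \<Longrightarrow> (U has_real_derivative U' r) (at r)"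
    and d2: "\<And>r. r > R \<Longrightarrow> (U' has_real_derivative U'' r) (at r)"
    and pos: "\<And>r. r > R \<Longrightarrow> U r > 0" and mono: "\<And>r. r > R \<Longrightarrow> U' r \<ge> 0"
    and ode: "\<And>r. r > R \<Longrightarrow> U'' r + ((real n - 1) / r + r / 2) * U' r - \<beta> / 2 * U r
               = \<gamma> * U r powr (\<gamma> - 1)"
  shows "\<exists>c>0. ((\<lambda>r. U r / r powr \<beta>) \<longlongrightarrow> c) at_top"
proof -
  define r1 where "r1 = max R 1 + 1"
  have r1: "r1 > R" "r1 > 1" unfolding r1_def by auto
  define m where "m = U r1"
  have m: "m > 0" using pos r1 unfolding m_def by auto
  have Um: "U r \<ge> m" if "r \<ge> r1" for r
    unfolding m_def using that
  proof (rule DERIV_nonneg_imp_nondecreasing[of r1 r U])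
    fix x assume "r1 \<le> x" "x \<le> r"
    then have "x > R" using r1 by auto
    then show "\<exists>y. (U has_real_derivative y) (at x) \<and> 0 \<le> y" using d1 mono by blast
  qed
  have Ugm: "U r powr (\<gamma> - 1) \<le> m powr (\<gamma> - 1)" if "r \<ge> r1" for r
    using Um[OF that] m \<gamma>1 by (intro powr_mono2') auto
  define Cc where "Cc = 2 * (\<beta> + n) * (\<beta> + 2)"
  have Cc: "Cc > 0" unfolding Cc_def using \<beta> by auto
  define W where "W r = U r / r powr \<beta>" for r
  define \<Psi> where "\<Psi> r = W r * (1 + 2 * (\<beta> + n) / r^2) + 2 * U' r / (r powr \<beta> * r)" for r
  define \<Psi>' where "\<Psi>' r = - Cc * W r / r^3 + 2 * \<gamma> * U r powr (\<gamma> - 1) / (r powr \<beta> * r)" for r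
  have d\<Psi>: "(\<Psi> has_real_derivative \<Psi>' r) (at r)" if r: "r \<ge> r1" for r
  proof -
    have rp: "r > 0" "r > R" using r r1 by auto
    have dp: "((\<lambda>r. r powr \<beta>) has_real_derivative \<beta> * (r powr \<beta> / r)) (at r)"
      using has_real_derivative_powr[OF rp(1), of \<beta>] rp by (simp add: powr_diff)
    have pp: "r powr \<beta> > 0" using rp by auto
    have U'': "U'' r = \<gamma> * U r powr (\<gamma> - 1) + \<beta> / 2 * U r - ((real n - 1) / r + r / 2) * U' r"
      using ode[OF rp(2)] by simp
    have pb: "r powr (\<beta> - 1) = r powr \<beta> / r" using rp by (simp add: powr_diff)
    have dW: "(W has_real_derivative (U' r * r powr \<beta> - U r * (\<beta> * r powr (\<beta> - 1))) / (r powr \<beta> * r powr \<beta>)) (at r)"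
      unfolding W_def
      apply (rule derivative_eq_intros d1[OF rp(2)] refl)+
      using rp by auto
    have dA: "((\<lambda>r. 1 + 2 * (\<beta> + n) / r^2) has_real_derivative - 4 * (\<beta> + n) / r^3) (at r)"
      using rp by (auto intro!: derivative_eq_intros DERIV_ident simp: field_simps power2_eq_square power3_eq_cube eval_nat_numeral)
    have dV: "((\<lambda>r. 2 * U' r / (r powr \<beta> * r)) has_real_derivative
       (2 * U'' r * (r powr \<beta> * r) - 2 * U' r * (\<beta> * r powr (\<beta> - 1) * r + r powr \<beta>)) / ((r powr \<beta> * r) * (r powr \<beta> * r))) (at r)"
      using rp by (auto intro!: derivative_eq_intros DERIV_ident d2[OF rp(2)] simp: field_simps)
    have "(\<Psi> has_real_derivative
       (U' r * r powr \<beta> - U r * (\<beta> * r powr (\<beta> - 1))) / (r powr \<beta> * r powr \<beta>) * (1 + 2 * (\<beta> + n) / r^2)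
       + (- 4 * (\<beta> + n) / r^3) * W r
       + (2 * U'' r * (r powr \<beta> * r) - 2 * U' r * (\<beta> * r powr (\<beta> - 1) * r + r powr \<beta>)) / ((r powr \<beta> * r) * (r powr \<beta> * r))) (at r)"
      unfolding \<Psi>_def
      by (intro DERIV_add DERIV_mult dW dA dV)
    then show ?thesis
      apply (rule DERIV_cong)
      unfolding \<Psi>'_def W_def U'' pb Cc_def using rp pp
      by (simp add: field_simps power2_eq_square power3_eq_cube)
  qed
  have pge: "r powr \<beta> \<ge> r" if "r \<ge> r1" for r
  proof -
    have "r powr 1 \<le> r powr \<beta>" using that r1 \<beta> by (intro powr_mono) auto
    then show ?thesis using that r1 by simp
  qed
  have Wpos: "W r > 0" if "r \<ge> r1" for r using pos[of r] that r1 unfolding W_def by auto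
  have \<Psi>W: "W r \<le> \<Psi> r" if "r \<ge> r1" for r
  proof -
    have "0 \<le> W r * (2 * (\<beta> + n) / r^2)" using Wpos[OF that] \<beta> by auto
    moreover have "0 \<le> 2 * U' r / (r powr \<beta> * r)" using mono[of r] that r1 by auto
    ultimately show ?thesis unfolding \<Psi>_def by (simp add: algebra_simps)
  qed
  define c where "c = 2 * \<gamma> * m powr (\<gamma> - 1)"
  have c: "c \<ge> 0" unfolding c_def using \<gamma>0 by auto
  have \<Psi>'le: "\<Psi>' r \<le> c / r^2" if r: "r \<ge> r1" for r
  proof -
    have "- Cc * W r / r^3 \<le> 0" using Cc Wpos[OF r] r r1 by (simp add: divide_nonpos_pos)
    moreover have "2 * \<gamma> * U r powr (\<gamma> - 1) / (r powr \<beta> * r) \<le> c / r^2"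
    proof -
      have "2 * \<gamma> * U r powr (\<gamma> - 1) \<le> c" unfolding c_def using Ugm[OF r] \<gamma>0 by (simp add: mult_left_mono)
      moreover have "r^2 \<le> r powr \<beta> * r" using pge[OF r] r r1 by (simp add: power2_eq_square mult_right_mono)
      moreover have "0 \<le> 2 * \<gamma> * U r powr (\<gamma> - 1)" using \<gamma>0 by auto
      ultimately show ?thesis using r r1 by (intro frac_le) auto
    qed
    ultimately show ?thesis unfolding \<Psi>'_def by linarith
  qed
  define B where "B = \<Psi> r1 + c / r1"
  have \<Psi>B: "\<Psi> r \<le> B" if r: "r \<ge> r1" for r
  proof -
    have der: "((\<lambda>r. \<Psi> r + c / r) has_real_derivative \<Psi>' x - c / x^2) (at x)" if x: "x \<in> {r1..r}" for x
    proof -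
      have xp: "x > 0" "x \<ge> r1" using x r1 by auto
      show ?thesis
        using d\<Psi>[OF xp(2)] xp by (auto intro!: derivative_eq_intros simp: power2_eq_square field_simps)
    qed
    have np: "\<Psi>' x - c / x^2 \<le> 0" if x: "x \<in> {r1..r}" for x using \<Psi>'le[of x] x by simp
    have "(\<lambda>r. \<Psi> r + c / r) r \<le> (\<lambda>r. \<Psi> r + c / r) r1"
      by (rule deriv_nonpos_imp_antimono[where g' = "\<lambda>x. \<Psi>' x - c / x^2", OF der np]) (use r in auto)
    moreover have "c / r \<ge> 0" using c r r1 by auto
    ultimately show ?thesis unfolding B_def by simp
  qed
  define \<Theta> where "\<Theta> r = \<Psi> r * exp (- Cc / (2 * r^2))" for r
  have \<Theta>mono: "\<Theta> x \<le> \<Theta> y" if "r1 \<le> x" "x \<le> y" for x y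
  proof (rule DERIV_nonneg_imp_nondecreasing[OF that(2)])
    fix z assume z: "x \<le> z" "z \<le> y"
    then have zp: "z > 0" "z \<ge> r1" using that r1 by auto
    have "(\<Theta> has_real_derivative \<Psi>' z * exp (- Cc / (2 * z^2)) + \<Psi> z * (exp (- Cc / (2 * z^2)) * (Cc / z^3))) (at z)"
      unfolding \<Theta>_def using d\<Psi>[OF zp(2)] zp
      by (auto intro!: derivative_eq_intros simp: power2_eq_square power3_eq_cube field_simps)
    moreover have "0 \<le> \<Psi>' z * exp (- Cc / (2 * z^2)) + \<Psi> z * (exp (- Cc / (2 * z^2)) * (Cc / z^3))"
    proof -
      have "\<Psi>' z + \<Psi> z * (Cc / z^3) = Cc * (\<Psi> z - W z) / z^3 + 2 * \<gamma> * U z powr (\<gamma> - 1) / (z powr \<beta> * z)"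
        unfolding \<Psi>'_def by (simp add: diff_divide_distrib right_diff_distrib)
      also have "\<dots> \<ge> 0" using \<Psi>W[OF zp(2)] Cc zp \<gamma>0 by auto
      finally have "0 \<le> (\<Psi>' z + \<Psi> z * (Cc / z^3)) * exp (- Cc / (2 * z^2))" by simp
      then show ?thesis by (simp add: algebra_simps)
    qed
    ultimately show "\<exists>y. (\<Theta> has_real_derivative y) (at z) \<and> 0 \<le> y" by blast
  qed
  have \<Theta>B: "\<Theta> x \<le> B" if "r1 \<le> x" for x
  proof -
    have "\<Psi> x \<ge> 0" using \<Psi>W[OF that] Wpos[OF that] by linarith
    moreover have "exp (- Cc / (2 * x^2)) \<le> 1" using Cc by simp
    ultimately have "\<Theta> x \<le> \<Psi> x" unfolding \<Theta>_def by (simp add: mult_left_le)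
    then show ?thesis using \<Psi>B[OF that] by linarith
  qed
  obtain L where L: "(\<Theta> \<longlongrightarrow> L) at_top" "\<Theta> r1 \<le> L"
    using mono_bdd_tendsto[of r1 \<Theta> B, OF \<Theta>mono \<Theta>B] by blast
  have Lpos: "L > 0"
  proof -
    have "\<Psi> r1 > 0" using \<Psi>W[of r1] Wpos[of r1] by auto
    then have "\<Theta> r1 > 0" unfolding \<Theta>_def by simp
    then show ?thesis using L by linarith
  qed
  have \<Psi>lim: "(\<Psi> \<longlongrightarrow> L) at_top"
  proof -
    have e: "((\<lambda>r. exp (Cc / (2 * r^2))) \<longlongrightarrow> 1) at_top" by real_asymp
    have "((\<lambda>r. \<Theta> r * exp (Cc / (2 * r^2))) \<longlongrightarrow> L * 1) at_top"
      by (intro tendsto_mult L(1) e)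
    moreover have "\<forall>\<^sub>F r in at_top. \<Theta> r * exp (Cc / (2 * r^2)) = \<Psi> r"
      unfolding \<Theta>_def by (simp add: exp_minus field_simps)
    ultimately show ?thesis using tendsto_cong by fastforce
  qed
  define C where "C = \<beta> * B / 2 + \<gamma> * m powr (\<gamma> - 1)"
  have Bnn: "B \<ge> 0" using \<Psi>B[of r1] \<Psi>W[of r1] Wpos[of r1] by auto
  have Fle: "\<beta> / 2 * U r + \<gamma> * U r powr (\<gamma> - 1) \<le> C * r powr \<beta>" if r: "r \<ge> r1" for r
  proof -
    have p1: "r powr \<beta> \<ge> 1" using pge[OF r] r1 r by linarith
    have "U r = W r * r powr \<beta>" unfolding W_def using r r1 by simp
    also have "\<dots> \<le> B * r powr \<beta>" using \<Psi>W[OF r] \<Psi>B[OF r] by (intro mult_right_mono) auto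
    finally have "\<beta> / 2 * U r \<le> \<beta> / 2 * (B * r powr \<beta>)" using \<beta> by (intro mult_left_mono) auto
    moreover have "\<gamma> * U r powr (\<gamma> - 1) \<le> \<gamma> * m powr (\<gamma> - 1) * r powr \<beta>"
    proof -
      have "\<gamma> * U r powr (\<gamma> - 1) \<le> \<gamma> * m powr (\<gamma> - 1)" using Ugm[OF r] \<gamma>0 by (intro mult_left_mono) auto
      also have "\<dots> \<le> \<gamma> * m powr (\<gamma> - 1) * r powr \<beta>" 
      proof -
        have "0 \<le> \<gamma> * m powr (\<gamma> - 1)" using \<gamma>0 m by auto
        then show ?thesis using p1 by (metis mult.right_neutral mult_left_mono)
      qed
      finally show ?thesis .
    qed
    ultimately show ?thesis unfolding C_def by (simp add: algebra_simps)
  qed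
  have C: "C \<ge> 0" unfolding C_def using \<beta> Bnn \<gamma>0 by auto
  define \<rho> where "\<rho> r = exp ((real n - 1) * ln r + r^2 / 4)" for r
  define g where "g r = \<rho> r * U' r - 2 * C * (r powr \<beta> / r) * \<rho> r" for r
  have gdec: "g r \<le> g r1" if r: "r \<ge> r1" for r
  proof -
    have der: "(g has_real_derivative \<rho> x * ((\<beta> / 2 * U x + \<gamma> * U x powr (\<gamma> - 1)) - 2 * C * (\<beta> - 1) * x powr \<beta> / x^2
       - 2 * C * (real n - 1) * x powr \<beta> / x^2 - C * x powr \<beta>)) (at x)" if x: "x \<in> {r1..r}" for x
    proof -
      have xp: "x > 0" "x > R" using x r1 by auto
      have pb: "x powr (\<beta> - 1) = x powr \<beta> / x" using xp by (simp add: powr_diff)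
      have U'': "U'' x = \<gamma> * U x powr (\<gamma> - 1) + \<beta> / 2 * U x - ((real n - 1) / x + x / 2) * U' x"
        using ode[OF xp(2)] by simp
      have d\<rho>: "(\<rho> has_real_derivative \<rho> x * ((real n - 1) / x + x / 2)) (at x)"
        unfolding \<rho>_def using xp by (auto intro!: derivative_eq_intros simp: field_simps power2_eq_square)
      have dq: "((\<lambda>r. r powr \<beta> / r) has_real_derivative (\<beta> - 1) * x powr \<beta> / x^2) (at x)"
        using xp by (auto intro!: derivative_eq_intros simp: pb field_simps power2_eq_square)
      have "(g has_real_derivative (\<rho> x * ((real n - 1) / x + x / 2)) * U' x + U'' x * \<rho> x
          - ((2 * C * ((\<beta> - 1) * x powr \<beta> / x^2)) * \<rho> x + (\<rho> x * ((real n - 1) / x + x / 2)) * (2 * C * (x powr \<beta> / x)))) (at x)"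
        unfolding g_def
        by (intro DERIV_diff DERIV_mult d\<rho> d1[OF xp(2)] d2[OF xp(2)] DERIV_cmult dq)
      then show ?thesis
        by (rule DERIV_cong) (use xp in \<open>simp add: U'' field_simps power2_eq_square\<close>)
    qed
    have np: "\<rho> x * ((\<beta> / 2 * U x + \<gamma> * U x powr (\<gamma> - 1)) - 2 * C * (\<beta> - 1) * x powr \<beta> / x^2
       - 2 * C * (real n - 1) * x powr \<beta> / x^2 - C * x powr \<beta>) \<le> 0" if x: "x \<in> {r1..r}" for x
    proof -
      have xp: "x > 0" "x \<ge> r1" using x r1 by auto
      have "0 \<le> 2 * C * (\<beta> - 1) * x powr \<beta> / x^2" using C \<beta> xp by auto
      moreover have "0 \<le> 2 * C * (real n - 1) * x powr \<beta> / x^2" using C n xp by auto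
      ultimately have "(\<beta> / 2 * U x + \<gamma> * U x powr (\<gamma> - 1)) - 2 * C * (\<beta> - 1) * x powr \<beta> / x^2
       - 2 * C * (real n - 1) * x powr \<beta> / x^2 - C * x powr \<beta> \<le> 0" using Fle[OF xp(2)] by linarith
      moreover have "\<rho> x > 0" unfolding \<rho>_def by simp
      ultimately show ?thesis by (simp add: mult_nonneg_nonpos)
    qed
    show ?thesis by (rule deriv_nonpos_imp_antimono[OF der np]) (use r in auto)
  qed
  define G0 where "G0 = \<bar>g r1\<bar> / \<rho> r1"
  have U'bd: "U' r / (r powr \<beta> * r) \<le> (G0 + 2 * C) / r^2" if r: "r \<ge> r1" for r
  proof -
    have rp: "r > 0" using r r1 by auto
    have \<rho>mono: "\<rho> r1 \<le> \<rho> r" unfolding \<rho>_def using r r1 n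
      by (auto intro!: add_mono mult_left_mono power_mono simp: ln_le_cancel_iff)
    have \<rho>p: "\<rho> r1 > 0" "\<rho> r > 0" unfolding \<rho>_def by auto
    have "\<rho> r * U' r \<le> g r1 + 2 * C * (r powr \<beta> / r) * \<rho> r" using gdec[OF r] unfolding g_def by simp
    then have "U' r \<le> g r1 / \<rho> r + 2 * C * (r powr \<beta> / r)" using \<rho>p by (simp add: field_simps)
    also have "g r1 / \<rho> r \<le> G0" unfolding G0_def using \<rho>p \<rho>mono
      by (meson abs_ge_self abs_ge_zero divide_right_mono frac_le order.trans)
    finally have "U' r \<le> G0 + 2 * C * (r powr \<beta> / r)" by simp
    then have "U' r / (r powr \<beta> * r) \<le> (G0 + 2 * C * (r powr \<beta> / r)) / (r powr \<beta> * r)"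
      using rp by (intro divide_right_mono) auto
    also have "\<dots> = G0 / (r powr \<beta> * r) + 2 * C / r^2" using rp by (simp add: field_simps power2_eq_square)
    also have "G0 / (r powr \<beta> * r) \<le> G0 / r^2"
      using pge[OF r] rp \<rho>p unfolding G0_def by (intro divide_left_mono) (auto simp: power2_eq_square intro: mult_right_mono)
    finally show ?thesis by (simp add: add_divide_distrib)
  qed
  have U'lim: "((\<lambda>r. U' r / (r powr \<beta> * r)) \<longlongrightarrow> 0) at_top"
  proof (rule tendsto_sandwich[where f = "\<lambda>_. 0" and h = "\<lambda>r. (G0 + 2 * C) / r^2"])
    show "\<forall>\<^sub>F r in at_top. 0 \<le> U' r / (r powr \<beta> * r)"
      using eventually_ge_at_top[of r1] by eventually_elim (use mono r1 in auto)
    show "\<forall>\<^sub>F r in at_top. U' r / (r powr \<beta> * r) \<le> (G0 + 2 * C) / r^2"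
      using eventually_ge_at_top[of r1] by eventually_elim (use U'bd in auto)
    show "((\<lambda>r. (G0 + 2 * C) / r^2) \<longlongrightarrow> 0) at_top" by real_asymp
  qed simp
  have "((\<lambda>r. (\<Psi> r - 2 * (U' r / (r powr \<beta> * r))) / (1 + 2 * (\<beta> + n) / r^2)) \<longlongrightarrow> (L - 2 * 0) / (1 + 0)) at_top"
    by (intro tendsto_intros \<Psi>lim U'lim) (real_asymp, simp)
  moreover have "\<forall>\<^sub>F r in at_top. (\<Psi> r - 2 * (U' r / (r powr \<beta> * r))) / (1 + 2 * (\<beta> + n) / r^2) = U r / r powr \<beta>"
    using eventually_ge_at_top[of r1]
  proof eventually_elim
    case (elim r)
    then have "r > 0" using r1 by auto
    moreover have "1 + 2 * (\<beta> + n) / r^2 > 0" using \<beta> by (auto intro!: add_pos_nonneg)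
    moreover have "\<Psi> r - 2 * (U' r / (r powr \<beta> * r)) = W r * (1 + 2 * (\<beta> + n) / r^2)"
      unfolding \<Psi>_def by simp
    ultimately show ?case unfolding W_def by simp
  qed
  ultimately have "((\<lambda>r. U r / r powr \<beta>) \<longlongrightarrow> L) at_top" using tendsto_cong by fastforce
  then show ?thesis using Lpos by blast
qed


lemma INT:
  fixes f :: "real \<Rightarrow> real"
  assumes cont: "continuous_on {0<..s} f" and bd: "\<And>t. t \<in> {0<..s} \<Longrightarrow> \<bar>f t\<bar> \<le> A + B * t powr p"
    and p: "p > -1" and s: "s \<ge> 0"
  shows "f integrable_on {0..s}"
proof -
  have gi: "(\<lambda>t. A + B * t powr p) integrable_on {0..s}"
    using integrable_on_powr_from_0[OF p s] by (intro integrable_add integrable_on_mult_right) auto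
  then have gi': "(\<lambda>t. A + B * t powr p) integrable_on {0<..<s}" by (simp add: integrable_on_Icc_iff_Ioo)
  have "continuous_on {0<..<s} f" using cont by (rule continuous_on_subset) auto
  then have "f \<in> borel_measurable (lebesgue_on {0<..<s})"
    by (intro continuous_imp_measurable_on_sets_lebesgue) auto
  then have "f integrable_on {0<..<s}"
    by (rule measurable_bounded_by_integrable_imp_integrable_real[OF _ gi']) (use bd in auto)
  then show ?thesis by (simp add: integrable_on_Icc_iff_Ioo)
qed

lemma HIpow: fixes s q :: real shows "s \<ge> 0 \<Longrightarrow> q > -1 \<Longrightarrow> ((\<lambda>t. t powr q) has_integral s powr (q + 1) / (q + 1)) {0..s}"
  using has_integral_powr_from_0[of q s] by simp

lemma HIexp:
  fixes K s :: real
  assumes "K > 0" "s \<ge> 0"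
  shows "((\<lambda>t. exp (K * t)) has_integral (exp (K * s) - 1) / K) {0..s}"
proof -
  have "((\<lambda>t. exp (K * t)) has_integral (exp (K * s) / K - exp (K * 0) / K)) {0..s}"
    by (rule fundamental_theorem_of_calculus)
       (use assms in \<open>auto intro!: derivative_eq_intros simp: has_real_derivative_iff_has_vector_derivative[symmetric]\<close>)
  then show ?thesis by (simp add: diff_divide_distrib)
qed

lemma HIid:
  fixes s :: real
  assumes "s \<ge> 0"
  shows "((\<lambda>t. t) has_integral s^2 / 2) {0..s}"
proof -
  have "((\<lambda>t. t) has_integral (s^2 / 2 - 0^2/2)) {0..s}"
    by (rule fundamental_theorem_of_calculus)
       (use assms in \<open>auto intro!: derivative_eq_intros simp: has_real_derivative_iff_has_vector_derivative[symmetric]\<close>)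
  then show ?thesis by simp
qed

lemma HIconst:
  fixes s c :: real
  assumes "s \<ge> 0"
  shows "((\<lambda>t. c) has_integral c * s) {0..s}"
  using has_integral_const_real[of c 0 s] assms by (simp add: mult.commute)

lemma DBL:
  fixes c1 c2 c3 q K x :: real
  assumes q: "q > -1" and K: "K > 0" and x: "x \<ge> 0"
  defines "G \<equiv> \<lambda>s. c1 * (s powr (q + 1) / (q + 1)) + c2 * s + c3 * ((exp (K * s) - 1) / K)"
  shows "\<And>s. s \<ge> 0 \<Longrightarrow> ((\<lambda>t. c1 * t powr q + c2 + c3 * exp (K * t)) has_integral G s) {0..s}"
    and "(G has_integral (c1 * (x powr (q + 2) / ((q + 1) * (q + 2))) + c2 * (x^2 / 2)
            + c3 * ((exp (K * x) - 1) / K^2 - x / K))) {0..x}"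
proof -
  fix s :: real assume s: "s \<ge> 0"
  show "((\<lambda>t. c1 * t powr q + c2 + c3 * exp (K * t)) has_integral G s) {0..s}"
    unfolding G_def
    by (intro has_integral_add has_integral_mult_right HIpow HIexp HIconst) (use s q K in auto)
next
  have "(G has_integral (c1 * ((x powr (q + 1 + 1) / (q + 1 + 1)) / (q + 1)) + c2 * (x^2 / 2)
            + c3 * (((exp (K * x) - 1) - K * x) / K^2))) {0..x}"
  proof -
    have e: "((\<lambda>s. (exp (K * s) - 1) / K) has_integral (((exp (K * x) - 1) - K * x) / K^2)) {0..x}"
    proof -
      have "((\<lambda>s. (1 / K) * exp (K * s) - (1 / K)) has_integral ((1 / K) * ((exp (K * x) - 1) / K) - (1 / K) * x)) {0..x}"
        by (intro has_integral_diff has_integral_mult_right HIexp HIconst) (use x K in auto)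
      moreover have "(1 / K) * ((exp (K * x) - 1) / K) - (1 / K) * x = ((exp (K * x) - 1) - K * x) / K^2"
        using K by (simp add: field_simps power2_eq_square)
      moreover have "(\<lambda>s. (1 / K) * exp (K * s) - (1 / K)) = (\<lambda>s. (exp (K * s) - 1) / K)"
        using K by (auto simp: field_simps)
      ultimately show ?thesis by simp
    qed
    have "((\<lambda>s. c1 * (s powr (q + 1) / (q + 1)) + c2 * s + c3 * ((exp (K * s) - 1) / K)) has_integral
        (c1 * ((x powr (q + 1 + 1) / (q + 1 + 1)) / (q + 1)) + c2 * (x^2 / 2)
            + c3 * (((exp (K * x) - 1) - K * x) / K^2))) {0..x}"
      by (intro has_integral_add has_integral_mult_right has_integral_divide HIpow HIid e) (use x q in auto)
    then show ?thesis unfolding G_def .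
  qed
  moreover have "c1 * ((x powr (q + 1 + 1) / (q + 1 + 1)) / (q + 1)) = c1 * (x powr (q + 2) / ((q + 1) * (q + 2)))"
    by (simp add: field_simps add.assoc)
  moreover have "((exp (K * x) - 1) - K * x) / K^2 = (exp (K * x) - 1) / K^2 - x / K"
    using K by (simp add: field_simps power2_eq_square)
  ultimately show "(G has_integral (c1 * (x powr (q + 2) / ((q + 1) * (q + 2))) + c2 * (x^2 / 2)
            + c3 * ((exp (K * x) - 1) / K^2 - x / K))) {0..x}" by simp
qed


locale ctxb =
  fixes n :: nat and \<gamma> \<beta> R :: real
  assumes n: "n \<ge> 1" and \<gamma>0: "0 \<le> \<gamma>" and \<gamma>1: "\<gamma> \<le> 1" and \<beta>def: "\<beta> = 2 / (2 - \<gamma>)" and R: "R > 0"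
begin

definition "\<rho> x = exp ((real n - 1) * ln (R + x) + (R + x)^2 / 4)"
definition "a = (sqrt 2 / \<beta>) powr \<beta>"
definition "c0 = (if \<gamma> = 0 then sqrt 2 else 0)"
definition "kk = (if \<gamma> = 0 then 0 else 1 - \<gamma>)"
definition "q0 = (if \<gamma> = 0 then 0 else \<beta> - 2)"

lemma \<beta>\<gamma>: "\<beta> * (2 - \<gamma>) = 2" using \<gamma>1 \<beta>def by (simp add: field_simps)
lemma \<beta>1: "\<beta> \<ge> 1" unfolding \<beta>def using \<gamma>0 \<gamma>1 by (simp add: le_divide_eq divide_le_eq)
lemma \<beta>2: "\<beta> \<le> 2" unfolding \<beta>def using \<gamma>0 \<gamma>1 by (simp add: le_divide_eq divide_le_eq)
lemma \<beta>gt1: "\<gamma> > 0 \<Longrightarrow> \<beta> > 1" unfolding \<beta>def using \<gamma>0 \<gamma>1 by (simp add: less_divide_eq divide_less_eq)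
lemma \<beta>m1: "\<beta> - 1 = \<gamma> * \<beta> / 2" using \<beta>\<gamma> by (simp add: algebra_simps)
lemma \<beta>\<gamma>1: "\<beta> * (\<gamma> - 1) = \<beta> - 2" using \<beta>\<gamma> by (simp add: algebra_simps)
lemma \<beta>\<gamma>2: "\<beta> * (\<gamma> - 2) = - 2" using \<beta>\<gamma> by (simp add: algebra_simps)
lemma apos: "a > 0" unfolding a_def using \<beta>1 by simp
lemma a_pow: "a powr (2 - \<gamma>) = 2 / \<beta>^2"
proof -
  have "a powr (2 - \<gamma>) = (sqrt 2 / \<beta>) powr (\<beta> * (2 - \<gamma>))" unfolding a_def using \<beta>1 by (simp add: powr_powr)
  also have "\<dots> = (sqrt 2 / \<beta>)^2" using \<beta>\<gamma> \<beta>1 by (simp add: powr_numeral)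
  also have "\<dots> = 2 / \<beta>^2" by (simp add: power_divide)
  finally show ?thesis .
qed
lemma a\<gamma>: assumes "\<gamma> > 0" shows "\<gamma> * a powr (\<gamma> - 1) = a * \<beta> * (\<beta> - 1)"
proof -
  have "a powr (\<gamma> - 1) = a powr (1 - (2 - \<gamma>))" by simp
  also have "\<dots> = a powr 1 / a powr (2 - \<gamma>)" by (rule powr_diff)
  also have "\<dots> = a / a powr (2 - \<gamma>)" using apos by simp
  also have "\<dots> = a * \<beta>^2 / 2" using a_pow by simp
  finally have h: "a powr (\<gamma> - 1) = a * \<beta>^2 / 2" .
  show ?thesis unfolding h \<beta>m1 by (simp add: power2_eq_square)
qed
lemma \<gamma>zero: assumes "\<gamma> = 0" shows "\<beta> = 1" "a = sqrt 2" "c0 = sqrt 2"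
  using assms \<beta>def unfolding a_def c0_def by auto
lemma kk: "0 \<le> kk" "kk < 1" unfolding kk_def using \<gamma>0 \<gamma>1 by auto
lemma q0: "q0 > -1" unfolding q0_def using \<beta>gt1 \<gamma>0 by auto

lemma \<rho>pos: "\<rho> x > 0" unfolding \<rho>_def by simp
lemma \<rho>mono: assumes "0 \<le> x" "x \<le> y" shows "\<rho> x \<le> \<rho> y"
  unfolding \<rho>_def using assms R n
  by (auto intro!: add_mono mult_left_mono power_mono simp: ln_le_cancel_iff)
lemma \<rho>der: assumes "x > -R"
  shows "(\<rho> has_real_derivative \<rho> x * ((real n - 1) / (R + x) + (R + x) / 2)) (at x)"
proof -
  have "((\<lambda>x. (real n - 1) * ln (R + x) + (R + x)^2 / 4) has_real_derivative ((real n - 1) / (R + x) + (R + x) / 2)) (at x)"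
  proof -
    have d1: "((\<lambda>x. ln (R + x)) has_real_derivative 1 / (R + x)) (at x)"
      using assms by (auto intro!: derivative_eq_intros simp: field_simps)
    have d2: "((\<lambda>x. (R + x) * (R + x) / 4) has_real_derivative (R + x) / 2) (at x)"
      using assms by (auto intro!: derivative_eq_intros simp: field_simps)
    have "((\<lambda>x. (real n - 1) * ln (R + x) + (R + x) * (R + x) / 4) has_real_derivative (real n - 1) * (1 / (R + x)) + (R + x) / 2) (at x)"
      by (intro DERIV_add DERIV_cmult d1 d2)
    then show ?thesis by (simp add: power2_eq_square)
  qed
  then show ?thesis unfolding \<rho>_def by (rule DERIV_fun_exp)
qed
lemma \<rho>cont: "continuous_on {0..} \<rho>"
  unfolding \<rho>_def using R by (auto intro!: continuous_intros)

end

lemma powr_lip_aux: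
  fixes e p y1 y2 :: real
  assumes e: "e \<le> 0" and p: "p > 0" "p \<le> y1" "y1 < y2"
  shows "\<bar>y1 powr e - y2 powr e\<bar> \<le> (- e) * p powr (e - 1) * \<bar>y1 - y2\<bar>"
proof -
  have der: "((\<lambda>y. y powr e) has_real_derivative (\<lambda>y. e * y powr (e - 1)) x) (at x)" if "y1 \<le> x" "x \<le> y2" for x
    using p that by (intro has_real_derivative_powr) auto
  obtain z where z: "y1 < z" "z < y2" "y2 powr e - y1 powr e = (y2 - y1) * (e * z powr (e - 1))"
    using MVT2[OF p(3), of "\<lambda>y. y powr e" "\<lambda>y. e * y powr (e - 1)", OF der] by blast
  have "z powr (e - 1) \<le> p powr (e - 1)" using z p e by (intro powr_mono2') auto
  moreover have "z powr (e - 1) \<ge> 0" by simp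
  ultimately have "\<bar>e * z powr (e - 1)\<bar> \<le> (- e) * p powr (e - 1)"
  proof -
    have "\<bar>e * z powr (e - 1)\<bar> = (- e) * z powr (e - 1)" using e by (simp add: abs_mult)
    also have "\<dots> \<le> (- e) * p powr (e - 1)" using \<open>z powr (e - 1) \<le> p powr (e - 1)\<close> e by (intro mult_left_mono) auto
    finally show ?thesis .
  qed
  then have "\<bar>y1 - y2\<bar> * \<bar>e * z powr (e - 1)\<bar> \<le> \<bar>y1 - y2\<bar> * ((- e) * p powr (e - 1))"
    by (intro mult_left_mono) auto
  then have "\<bar>(y2 - y1) * (e * z powr (e - 1))\<bar> \<le> \<bar>y1 - y2\<bar> * ((- e) * p powr (e - 1))"
    by (simp only: abs_mult abs_minus_commute)
  then show ?thesis using z(3) by (simp add: abs_minus_commute mult.commute)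
qed

lemma powr_lip:
  fixes e p y1 y2 :: real
  assumes e: "e \<le> 0" and p: "p > 0" "p \<le> y1" "p \<le> y2"
  shows "\<bar>y1 powr e - y2 powr e\<bar> \<le> (- e) * p powr (e - 1) * \<bar>y1 - y2\<bar>"
proof -
  consider "y1 < y2" | "y1 = y2" | "y2 < y1" by linarith
  then show ?thesis
  proof cases
    case 1 then show ?thesis using powr_lip_aux[OF e p(1,2)] by auto
  next
    case 3 then show ?thesis using powr_lip_aux[OF e p(1,3), of y1] by (simp add: abs_minus_commute)
  qed simp
qed

context ctxb
begin

definition "Ac \<eta> = \<gamma> * (1 - \<gamma>) * (exp (- \<eta>) * a) powr (\<gamma> - 2)"
definition "Bc \<eta> \<delta> = \<beta> / 2 + \<gamma> * (1 - \<gamma>) * (exp (- \<eta>) * a * \<delta> powr \<beta>) powr (\<gamma> - 2)"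

end

locale ctxs = ctxb +
  fixes \<eta> \<delta> K :: real
  assumes \<eta>: "\<eta> > 0" and \<delta>: "\<delta> > 0" and K: "K \<ge> 1"
    and contr: "Ac \<eta> / (\<beta> * (\<beta> - 1)) + Bc \<eta> \<delta> / K^2 < 1"
    and self1: "exp (- (1 - kk) * \<eta>) \<le> \<rho> 0 / \<rho> \<delta>"
    and self2: "exp (kk * \<eta>) + \<beta> * exp \<eta> * \<delta>^2 / 4 \<le> exp \<eta>"
begin

definition "\<phi> t = exp (- \<eta>) * a * (min t \<delta>) powr \<beta>"
definition "Ftr t u = \<beta> / 2 * u + \<gamma> * (max u (\<phi> t)) powr (\<gamma> - 1)"
definition "Sg t = \<gamma> * (exp (- \<eta>) * a) powr (\<gamma> - 1) * (t powr q0 + \<delta> powr q0)"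
definition "Iin U s = integral {0..s} (\<lambda>t. \<rho> t * Ftr t (U t))"
definition "TT U x = integral {0..x} (\<lambda>s. (c0 * \<rho> 0 + Iin U s) / \<rho> s)"
definition "w x = x powr \<beta> * exp (K * x)"
definition "adm U D \<longleftrightarrow> continuous_on {0<..} U \<and> (\<forall>x>0. \<bar>U x\<bar> \<le> D * w x) \<and>
   (\<forall>x. 0 < x \<and> x \<le> \<delta> \<longrightarrow> exp (- \<eta>) * a * x powr \<beta> \<le> U x \<and> U x \<le> exp \<eta> * a * x powr \<beta>)"

lemma \<phi>pos: "t > 0 \<Longrightarrow> \<phi> t > 0" unfolding \<phi>_def using apos \<delta> by simp
lemma \<phi>cont: "continuous_on {0<..} \<phi>"
  unfolding \<phi>_def using \<delta> by (auto intro!: continuous_intros)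

lemma FB: assumes t: "t > 0" shows "\<bar>Ftr t u\<bar> \<le> \<beta> / 2 * \<bar>u\<bar> + Sg t"
proof (cases "\<gamma> = 0")
  case True then show ?thesis unfolding Ftr_def Sg_def using \<beta>1 by (simp add: abs_mult)
next
  case False
  then have g: "\<gamma> > 0" using \<gamma>0 by auto
  have p: "\<phi> t > 0" using \<phi>pos[OF t] .
  have "max u (\<phi> t) powr (\<gamma> - 1) \<le> \<phi> t powr (\<gamma> - 1)" using p \<gamma>1 by (intro powr_mono2') auto
  also have "\<phi> t powr (\<gamma> - 1) = (exp (- \<eta>) * a) powr (\<gamma> - 1) * (min t \<delta>) powr q0"
  proof -
    have "\<phi> t powr (\<gamma> - 1) = (exp (- \<eta>) * a) powr (\<gamma> - 1) * ((min t \<delta>) powr \<beta>) powr (\<gamma> - 1)"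
      unfolding \<phi>_def using apos by (simp add: powr_mult)
    also have "((min t \<delta>) powr \<beta>) powr (\<gamma> - 1) = (min t \<delta>) powr q0"
      unfolding q0_def using g \<beta>\<gamma>1 by (simp add: powr_powr)
    finally show ?thesis .
  qed
  also have "\<dots> \<le> (exp (- \<eta>) * a) powr (\<gamma> - 1) * (t powr q0 + \<delta> powr q0)"
    by (intro mult_left_mono) (auto simp: min_def)
  finally have "\<gamma> * max u (\<phi> t) powr (\<gamma> - 1) \<le> Sg t" unfolding Sg_def using g by (simp add: mult_left_mono)
  moreover have "\<gamma> * max u (\<phi> t) powr (\<gamma> - 1) \<ge> 0" using g by simp
  moreover have "\<beta> / 2 * u \<le> \<beta> / 2 * \<bar>u\<bar>" using \<beta>1 by (intro mult_left_mono) auto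
  moreover have "\<beta> / 2 * (- u) \<le> \<beta> / 2 * \<bar>u\<bar>" using \<beta>1 by (intro mult_left_mono) auto
  ultimately show ?thesis unfolding Ftr_def by (simp add: abs_le_iff)
qed

lemma Flip: assumes t: "t > 0"
  shows "\<bar>Ftr t u1 - Ftr t u2\<bar> \<le> (\<beta> / 2 + \<gamma> * (1 - \<gamma>) * \<phi> t powr (\<gamma> - 2)) * \<bar>u1 - u2\<bar>"
proof -
  have p: "\<phi> t > 0" using \<phi>pos[OF t] .
  have "\<bar>max u1 (\<phi> t) powr (\<gamma> - 1) - max u2 (\<phi> t) powr (\<gamma> - 1)\<bar>
      \<le> (- (\<gamma> - 1)) * \<phi> t powr (\<gamma> - 1 - 1) * \<bar>max u1 (\<phi> t) - max u2 (\<phi> t)\<bar>"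
    using p \<gamma>1 by (intro powr_lip) auto
  also have "\<dots> = (1 - \<gamma>) * \<phi> t powr (\<gamma> - 2) * \<bar>max u1 (\<phi> t) - max u2 (\<phi> t)\<bar>"
    by (simp add: algebra_simps)
  also have "\<dots> \<le> (1 - \<gamma>) * \<phi> t powr (\<gamma> - 2) * \<bar>u1 - u2\<bar>"
    using \<gamma>1 by (intro mult_left_mono) (auto simp: max_def)
  finally have h: "\<bar>max u1 (\<phi> t) powr (\<gamma> - 1) - max u2 (\<phi> t) powr (\<gamma> - 1)\<bar> \<le> (1 - \<gamma>) * \<phi> t powr (\<gamma> - 2) * \<bar>u1 - u2\<bar>" .
  have "\<bar>Ftr t u1 - Ftr t u2\<bar> = \<bar>\<beta> / 2 * (u1 - u2) + \<gamma> * (max u1 (\<phi> t) powr (\<gamma> - 1) - max u2 (\<phi> t) powr (\<gamma> - 1))\<bar>"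
    unfolding Ftr_def by (rule arg_cong[where f = abs]) (simp add: field_simps)
  also have "\<dots> \<le> \<beta> / 2 * \<bar>u1 - u2\<bar> + \<gamma> * ((1 - \<gamma>) * \<phi> t powr (\<gamma> - 2) * \<bar>u1 - u2\<bar>)"
    using h \<gamma>0 \<beta>1 by (intro order.trans[OF abs_triangle_ineq] add_mono) (auto simp: abs_mult intro: mult_left_mono)
  finally show ?thesis by (simp add: algebra_simps)
qed

lemma Ftr_cont: assumes "continuous_on {0<..} U" shows "continuous_on {0<..} (\<lambda>t. \<rho> t * Ftr t (U t))"
proof -
  have "continuous_on {0<..} (\<lambda>t. max (U t) (\<phi> t) powr (\<gamma> - 1))"
  proof (rule continuous_on_powr)
    show "continuous_on {0<..} (\<lambda>t. max (U t) (\<phi> t))" using assms \<phi>cont by (rule continuous_on_max)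
    show "\<forall>x\<in>{0<..}. max (U x) (\<phi> x) \<noteq> 0" using \<phi>pos by (metis greaterThan_iff less_max_iff_disj order_less_irrefl)
  qed (rule continuous_on_const)
  moreover have "continuous_on {0<..} \<rho>" unfolding \<rho>_def using R by (auto intro!: continuous_intros)
  ultimately show ?thesis unfolding Ftr_def using assms by (intro continuous_on_mult continuous_on_add continuous_on_const)
qed

end

context ctxs
begin

lemma \<rho>ne[simp]: "\<rho> x \<noteq> 0" using \<rho>pos[of x] by simp

lemma Ftr_cont0: assumes "continuous_on {0<..} U" shows "continuous_on {0<..} (\<lambda>t. Ftr t (U t))"
proof -
  have "continuous_on {0<..} (\<lambda>t. max (U t) (\<phi> t) powr (\<gamma> - 1))"
  proof (rule continuous_on_powr)
    show "continuous_on {0<..} (\<lambda>t. max (U t) (\<phi> t))" using assms \<phi>cont by (rule continuous_on_max)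
    show "\<forall>x\<in>{0<..}. max (U x) (\<phi> x) \<noteq> 0" using \<phi>pos by (metis greaterThan_iff less_max_iff_disj order_less_irrefl)
  qed (rule continuous_on_const)
  then show ?thesis unfolding Ftr_def using assms by (intro continuous_on_mult continuous_on_add continuous_on_const)
qed

definition "cS = \<gamma> * (exp (- \<eta>) * a) powr (\<gamma> - 1)"
lemma cS: "cS \<ge> 0" unfolding cS_def using \<gamma>0 by simp
lemma Sg_eq: "Sg t = cS * t powr q0 + cS * \<delta> powr q0" unfolding Sg_def cS_def by (simp add: algebra_simps)

lemma w_pos: "x > 0 \<Longrightarrow> w x > 0" unfolding w_def by simp
lemma w_mono: "0 < t \<Longrightarrow> t \<le> s \<Longrightarrow> w t \<le> w s"
  unfolding w_def using \<beta>1 K by (intro mult_mono powr_mono2) auto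
lemma w_cont: "continuous_on {0<..} w" unfolding w_def by (auto intro!: continuous_intros)

lemma adm_D: assumes "adm U D" shows "D \<ge> 0"
proof -
  have "\<bar>U \<delta>\<bar> \<le> D * w \<delta>" using assms \<delta> unfolding adm_def by auto
  then have "0 \<le> D * w \<delta>" by linarith
  then show ?thesis using w_pos[OF \<delta>] by (simp add: zero_le_mult_iff)
qed

lemma adm_Fbound: assumes "adm U D" "t \<in> {0<..s}"
  shows "\<bar>Ftr t (U t)\<bar> \<le> (\<beta> / 2 * D * w s + cS * \<delta> powr q0) + cS * t powr q0"
proof -
  have t: "t > 0" "t \<le> s" using assms by auto
  have "\<bar>U t\<bar> \<le> D * w t" using assms t unfolding adm_def by auto
  also have "\<dots> \<le> D * w s" using w_mono[OF t] adm_D[OF assms(1)] by (intro mult_left_mono) auto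
  finally have "\<beta> / 2 * \<bar>U t\<bar> \<le> \<beta> / 2 * (D * w s)" using \<beta>1 by (intro mult_left_mono) auto
  then show ?thesis using FB[OF t(1), of "U t"] unfolding Sg_eq by simp
qed

lemma adm_cont: "adm U D \<Longrightarrow> continuous_on {0<..} U" unfolding adm_def by auto

lemma integ_F: assumes "adm U D" "s \<ge> 0" shows "(\<lambda>t. Ftr t (U t)) integrable_on {0..s}"
proof (rule INT[OF _ _ q0 assms(2)])
  have "continuous_on {0<..} (\<lambda>t. Ftr t (U t))" by (rule Ftr_cont0[OF adm_cont[OF assms(1)]])
  then show "continuous_on {0<..s} (\<lambda>t. Ftr t (U t))" by (rule continuous_on_subset) auto
  show "\<bar>Ftr t (U t)\<bar> \<le> (\<beta> / 2 * D * w s + cS * \<delta> powr q0) + cS * t powr q0" if "t \<in> {0<..s}" for t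
    using adm_Fbound[OF assms(1) that] .
qed

lemma integ_rF: assumes "adm U D" "s \<ge> 0" shows "(\<lambda>t. \<rho> t * Ftr t (U t)) integrable_on {0..s}"
proof (rule INT[OF _ _ q0 assms(2)])
  show "continuous_on {0<..s} (\<lambda>t. \<rho> t * Ftr t (U t))"
    by (rule continuous_on_subset[OF Ftr_cont[OF adm_cont[OF assms(1)]]]) auto
  show "\<bar>\<rho> t * Ftr t (U t)\<bar> \<le> \<rho> s * (\<beta> / 2 * D * w s + cS * \<delta> powr q0) + \<rho> s * cS * t powr q0" if t: "t \<in> {0<..s}" for t
  proof -
    have "\<bar>\<rho> t * Ftr t (U t)\<bar> = \<rho> t * \<bar>Ftr t (U t)\<bar>" using \<rho>pos[of t] by (simp add: abs_mult)
    also have "\<dots> \<le> \<rho> s * \<bar>Ftr t (U t)\<bar>" using \<rho>mono[of t s] t by (intro mult_right_mono) auto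
    also have "\<dots> \<le> \<rho> s * ((\<beta> / 2 * D * w s + cS * \<delta> powr q0) + cS * t powr q0)"
      using adm_Fbound[OF assms(1) t] \<rho>pos[of s] by (intro mult_left_mono) auto
    finally show ?thesis by (simp add: algebra_simps)
  qed
qed

lemma Iin_cont: assumes "adm U D" shows "continuous_on {0..X} (Iin U)"
proof (cases "X \<ge> 0")
  case True
  show ?thesis unfolding Iin_def by (rule indefinite_integral_continuous_1[OF integ_rF[OF assms True]])
qed auto

lemma TTi_cont: assumes "adm U D" shows "continuous_on {0..X} (\<lambda>s. (c0 * \<rho> 0 + Iin U s) / \<rho> s)"
proof -
  have "continuous_on {0..X} \<rho>" by (rule continuous_on_subset[OF \<rho>cont]) auto
  then show ?thesis using Iin_cont[OF assms] \<rho>pos by (intro continuous_intros) auto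
qed

lemma TT_cont: assumes "adm U D" shows "continuous_on {0..X} (TT U)"
  unfolding TT_def by (rule indefinite_integral_continuous_1[OF integrable_continuous_interval[OF TTi_cont[OF assms]]])

lemma TT_isCont: assumes "adm U D" "x > 0" shows "isCont (TT U) x"
  using continuous_on_interior[OF TT_cont[OF assms(1), of "x + 1"]] assms(2) by simp

lemma TT_cont': assumes "adm U D" shows "continuous_on {0..} (TT U)"
proof -
  have "continuous (at x within {0..}) (TT U)" if "x \<ge> 0" for x
  proof -
    have "continuous (at x within {0..x+1}) (TT U)"
      using TT_cont[OF assms, of "x+1"] that by (simp add: continuous_on_eq_continuous_within)
    moreover have "at x within {0..x+1} = at x within {0..}"
      by (intro at_within_nhd[of _ "{..<x+1}"]) auto
    ultimately show ?thesis by simp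
  qed
  then show ?thesis by (simp add: continuous_on_eq_continuous_within)
qed

lemma Iin_der: assumes "adm U D" "x > 0" shows "(Iin U has_real_derivative \<rho> x * Ftr x (U x)) (at x)"
proof -
  have "isCont (\<lambda>t. \<rho> t * Ftr t (U t)) x"
    using Ftr_cont[OF adm_cont[OF assms(1)]] assms(2) by (simp add: continuous_on_eq_continuous_at)
  then have c: "continuous (at x within ({0..x+1} - {})) (\<lambda>t. \<rho> t * Ftr t (U t))"
    by (simp add: continuous_at_imp_continuous_within)
  have "((\<lambda>u. integral {0..u} (\<lambda>t. \<rho> t * Ftr t (U t))) has_vector_derivative \<rho> x * Ftr x (U x)) (at x within ({0..x+1} - {}))"
    by (rule integral_has_vector_derivative_continuous_at[OF integ_rF[OF assms(1)] _ _ c]) (use assms in auto)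
  moreover have "at x within ({0..x+1} - {}) = at x" using assms(2) by (intro at_within_interior) auto
  ultimately show ?thesis unfolding Iin_def by (simp add: has_real_derivative_iff_has_vector_derivative)
qed

lemma TT_der: assumes "adm U D" "x > 0" shows "(TT U has_real_derivative (c0 * \<rho> 0 + Iin U x) / \<rho> x) (at x)"
proof -
  have "(TT U has_vector_derivative (c0 * \<rho> 0 + Iin U x) / \<rho> x) (at x within {0..x+1})"
    unfolding TT_def by (rule integral_has_vector_derivative[OF TTi_cont[OF assms(1)]]) (use assms in auto)
  moreover have "at x within {0..x+1} = at x" using assms(2) by (intro at_within_interior) auto
  ultimately show ?thesis by (simp add: has_real_derivative_iff_has_vector_derivative)
qed

end

context ctxs
begin

lemma x2w: assumes x: "x > 0" shows "x^2 \<le> w x"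
proof -
  have "x powr (2 - \<beta>) \<le> exp (K * x)"
  proof (cases "x \<le> 1")
    case True
    then have "x powr (2 - \<beta>) \<le> 1 powr (2 - \<beta>)" using x \<beta>2 by (intro powr_mono2) auto
    then have "x powr (2 - \<beta>) \<le> 1" by simp
    also have "1 \<le> exp (K * x)" using x K by simp
    finally show ?thesis .
  next
    case False
    then have "x powr (2 - \<beta>) \<le> x powr 1" using \<beta>1 by (intro powr_mono) auto
    also have "\<dots> = x" using x by simp
    also have "x \<le> exp x" using exp_ge_add_one_self[of x] by linarith
    also have "exp x \<le> exp (K * x)" using K x by simp
    finally show ?thesis .
  qed
  then have "x powr \<beta> * x powr (2 - \<beta>) \<le> x powr \<beta> * exp (K * x)" by (intro mult_left_mono) auto
  moreover have "x powr \<beta> * x powr (2 - \<beta>) = x^2" using x by (simp add: powr_add[symmetric] powr_numeral)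
  ultimately show ?thesis unfolding w_def by simp
qed

lemma Jle:
  fixes h g :: "real \<Rightarrow> real"
  assumes s: "s \<ge> 0" and hi: "(\<lambda>t. \<rho> t * h t) integrable_on {0..s}" and gi: "(g has_integral G) {0..s}"
    and hg: "\<And>t. t \<in> {0<..<s} \<Longrightarrow> \<bar>h t\<bar> \<le> g t"
  shows "\<bar>integral {0..s} (\<lambda>t. \<rho> t * h t)\<bar> \<le> \<rho> s * G"
proof -
  define I where "I = integral {0..s} (\<lambda>t. \<rho> t * h t)"
  have hI: "((\<lambda>t. \<rho> t * h t) has_integral I) {0<..<s}"
    using hi unfolding I_def by (simp add: has_integral_Icc_iff_Ioo[symmetric] integrable_integral)
  have gI: "((\<lambda>t. \<rho> s * g t) has_integral \<rho> s * G) {0<..<s}"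
    using has_integral_mult_right[OF gi] by (simp add: has_integral_Icc_iff_Ioo)
  have gI': "((\<lambda>t. - (\<rho> s * g t)) has_integral - (\<rho> s * G)) {0<..<s}"
    using has_integral_neg[OF gI] .
  have b: "\<bar>\<rho> t * h t\<bar> \<le> \<rho> s * g t" if t: "t \<in> {0<..<s}" for t
  proof -
    have "\<bar>\<rho> t * h t\<bar> = \<rho> t * \<bar>h t\<bar>" using \<rho>pos[of t] by (simp add: abs_mult)
    also have "\<dots> \<le> \<rho> t * g t" using hg[OF t] \<rho>pos[of t] by (intro mult_left_mono) auto
    also have "\<dots> \<le> \<rho> s * g t" using hg[OF t] \<rho>mono[of t s] t by (intro mult_right_mono) auto
    finally show ?thesis .
  qed
  have "I \<le> \<rho> s * G" by (rule has_integral_le[OF hI gI]) (use b in \<open>auto simp: abs_le_iff\<close>)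
  moreover have "- (\<rho> s * G) \<le> I"
  proof (rule has_integral_le[OF gI' hI])
    fix t assume "t \<in> {0<..<s}"
    from abs_le_D2[OF b[OF this]] show "- (\<rho> s * g t) \<le> \<rho> t * h t" by linarith
  qed
  ultimately show ?thesis unfolding I_def by auto
qed

lemma Jge:
  fixes h g :: "real \<Rightarrow> real"
  assumes s: "s \<ge> 0" and hi: "(\<lambda>t. \<rho> t * h t) integrable_on {0..s}" and gi: "(g has_integral G) {0..s}"
    and hg: "\<And>t. t \<in> {0<..<s} \<Longrightarrow> 0 \<le> g t \<and> g t \<le> h t"
  shows "\<rho> 0 * G \<le> integral {0..s} (\<lambda>t. \<rho> t * h t)"
proof -
  define I where "I = integral {0..s} (\<lambda>t. \<rho> t * h t)"
  have hI: "((\<lambda>t. \<rho> t * h t) has_integral I) {0<..<s}"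
    using hi unfolding I_def by (simp add: has_integral_Icc_iff_Ioo[symmetric] integrable_integral)
  have gI: "((\<lambda>t. \<rho> 0 * g t) has_integral \<rho> 0 * G) {0<..<s}"
    using has_integral_mult_right[OF gi] by (simp add: has_integral_Icc_iff_Ioo)
  have b: "\<rho> 0 * g t \<le> \<rho> t * h t" if t: "t \<in> {0<..<s}" for t
  proof -
    have "\<rho> 0 * g t \<le> \<rho> t * g t" using hg[OF t] \<rho>mono[of 0 t] t by (intro mult_right_mono) auto
    also have "\<dots> \<le> \<rho> t * h t" using hg[OF t] \<rho>pos[of t] by (intro mult_left_mono) auto
    finally show ?thesis .
  qed
  show ?thesis unfolding I_def[symmetric] by (rule has_integral_le[OF gI hI]) (use b in auto)
qed

lemma outer_le:
  fixes f G :: "real \<Rightarrow> real"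
  assumes "continuous_on {0..x} f" "(G has_integral V) {0..x}" "\<And>s. s \<in> {0..x} \<Longrightarrow> f s \<le> G s"
  shows "integral {0..x} f \<le> V"
  by (rule has_integral_le[OF integrable_integral[OF integrable_continuous_interval[OF assms(1)]] assms(2)])
     (use assms(3) in auto)

lemma outer_ge:
  fixes f G :: "real \<Rightarrow> real"
  assumes "continuous_on {0..x} f" "(G has_integral V) {0..x}" "\<And>s. s \<in> {0..x} \<Longrightarrow> G s \<le> f s"
  shows "V \<le> integral {0..x} f"
  by (rule has_integral_le[OF assms(2) integrable_integral[OF integrable_continuous_interval[OF assms(1)]]])
     (use assms(3) in auto)

lemma adm_Fbound2: assumes "adm U D" "t \<in> {0<..x}"
  shows "\<bar>Ftr t (U t)\<bar> \<le> cS * t powr q0 + cS * \<delta> powr q0 + \<beta> / 2 * D * x powr \<beta> * exp (K * t)"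
proof -
  have t: "t > 0" "t \<le> x" using assms by auto
  have "\<bar>U t\<bar> \<le> D * w t" using assms t unfolding adm_def by auto
  also have "\<dots> \<le> D * (x powr \<beta> * exp (K * t))" unfolding w_def
    using adm_D[OF assms(1)] t \<beta>1 by (intro mult_left_mono mult_right_mono powr_mono2) auto
  finally have "\<beta> / 2 * \<bar>U t\<bar> \<le> \<beta> / 2 * (D * (x powr \<beta> * exp (K * t)))" using \<beta>1 by (intro mult_left_mono) auto
  then show ?thesis using FB[OF t(1), of "U t"] unfolding Sg_eq by (simp add: algebra_simps)
qed

definition "Cb D = c0 + cS / ((q0 + 1) * (q0 + 2)) + cS * \<delta> powr q0 / 2 + \<beta> * D / (2 * K^2)"

lemma TT_bound: assumes U: "adm U D" and x: "x > 0" shows "\<bar>TT U x\<bar> \<le> Cb D * w x"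
proof -
  have D: "D \<ge> 0" using adm_D[OF U] .
  define c2 where "c2 = cS * \<delta> powr q0"
  define c3 where "c3 = \<beta> / 2 * D * x powr \<beta>"
  have K0: "K > 0" using K by simp
  define G where "G = (\<lambda>s. cS * (s powr (q0 + 1) / (q0 + 1)) + c2 * s + c3 * ((exp (K * s) - 1) / K))"
  have G1: "((\<lambda>t. cS * t powr q0 + c2 + c3 * exp (K * t)) has_integral G s) {0..s}" if "s \<ge> 0" for s
    unfolding G_def by (rule DBL(1)[OF q0 K0 order.refl that])
  have G2: "(G has_integral (cS * (x powr (q0 + 2) / ((q0 + 1) * (q0 + 2))) + c2 * (x^2 / 2)
            + c3 * ((exp (K * x) - 1) / K^2 - x / K))) {0..x}"
    unfolding G_def by (rule DBL(2)[OF q0 K0]) (use x in auto)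
  have inner: "\<bar>(c0 * \<rho> 0 + Iin U s) / \<rho> s\<bar> \<le> c0 + G s" if s: "s \<in> {0..x}" for s
  proof -
    have "\<bar>Iin U s\<bar> \<le> \<rho> s * G s" unfolding Iin_def
      by (rule Jle[OF _ integ_rF[OF U] G1]) (use s adm_Fbound2[OF U, of _ x] in \<open>auto simp: c2_def c3_def\<close>)
    then have "\<bar>Iin U s\<bar> / \<rho> s \<le> G s" using \<rho>pos[of s] by (simp add: divide_le_eq mult.commute)
    moreover have "c0 * \<rho> 0 / \<rho> s \<le> c0" using \<rho>mono[of 0 s] s \<rho>pos[of s]
      unfolding c0_def by (auto simp: divide_le_eq)
    moreover have "c0 \<ge> 0" unfolding c0_def by auto
    moreover have "\<bar>(c0 * \<rho> 0 + Iin U s) / \<rho> s\<bar> \<le> \<bar>c0 * \<rho> 0 / \<rho> s\<bar> + \<bar>Iin U s\<bar> / \<rho> s"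
    proof -
      have "\<bar>(c0 * \<rho> 0 + Iin U s) / \<rho> s\<bar> = \<bar>c0 * \<rho> 0 + Iin U s\<bar> / \<rho> s" using \<rho>pos[of s] by simp
      also have "\<dots> \<le> (\<bar>c0 * \<rho> 0\<bar> + \<bar>Iin U s\<bar>) / \<rho> s" using \<rho>pos[of s] by (intro divide_right_mono abs_triangle_ineq) auto
      finally show ?thesis using \<rho>pos[of s] by (simp add: add_divide_distrib)
    qed
    moreover have "\<bar>c0 * \<rho> 0 / \<rho> s\<bar> = c0 * \<rho> 0 / \<rho> s" using \<open>c0 \<ge> 0\<close> \<rho>pos[of 0] \<rho>pos[of s] by simp
    ultimately show ?thesis by linarith
  qed
  have "\<bar>TT U x\<bar> \<le> integral {0..x} (\<lambda>s. c0 + G s)"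
    unfolding TT_def
  proof (rule integral_norm_bound_integral[where 'a = real, unfolded real_norm_def])
    show "(\<lambda>s. (c0 * \<rho> 0 + Iin U s) / \<rho> s) integrable_on {0..x}"
      by (rule integrable_continuous_interval[OF TTi_cont[OF U]])
    show "(\<lambda>s. c0 + G s) integrable_on {0..x}"
      using G2 HIconst[of x c0] x by (intro integrable_add) auto
  qed (use inner in auto)
  also have "integral {0..x} (\<lambda>s. c0 + G s) = c0 * x + (cS * (x powr (q0 + 2) / ((q0 + 1) * (q0 + 2))) + c2 * (x^2 / 2)
            + c3 * ((exp (K * x) - 1) / K^2 - x / K))"
    by (intro integral_unique has_integral_add HIconst G2) (use x in auto)
  also have "\<dots> \<le> Cb D * w x"
  proof -
    have wx: "w x > 0" using w_pos[OF x] .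
    have a1: "c0 * x \<le> c0 * w x"
    proof (cases "\<gamma> = 0")
      case True
      then have "x = x powr \<beta>" using \<gamma>zero x by simp
      also have "\<dots> \<le> w x" unfolding w_def using x K by simp
      finally show ?thesis unfolding c0_def by (intro mult_left_mono) auto
    qed (simp add: c0_def)
    have a2: "cS * (x powr (q0 + 2) / ((q0 + 1) * (q0 + 2))) \<le> cS / ((q0 + 1) * (q0 + 2)) * w x"
    proof (cases "\<gamma> = 0")
      case True then show ?thesis unfolding cS_def by simp
    next
      case False
      then have "q0 + 2 = \<beta>" unfolding q0_def by simp
      then have "x powr (q0 + 2) \<le> w x" unfolding w_def using x K by simp
      then show ?thesis using cS q0 by (simp add: divide_right_mono mult_left_mono)
    qed
    have a3: "c2 * (x^2 / 2) \<le> cS * \<delta> powr q0 / 2 * w x" unfolding c2_def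
      using x2w[OF x] cS by (simp add: mult_left_mono)
    have a4: "c3 * ((exp (K * x) - 1) / K^2 - x / K) \<le> \<beta> * D / (2 * K^2) * w x"
    proof -
      have "(exp (K * x) - 1) / K^2 \<le> exp (K * x) / K^2" using K0 by (intro divide_right_mono) auto
      moreover have "x / K \<ge> 0" using x K0 by simp
      ultimately have "(exp (K * x) - 1) / K^2 - x / K \<le> exp (K * x) / K^2" by linarith
      moreover have "c3 \<ge> 0" unfolding c3_def using D \<beta>1 by simp
      ultimately have "c3 * ((exp (K * x) - 1) / K^2 - x / K) \<le> c3 * (exp (K * x) / K^2)" by (rule mult_left_mono)
      also have "\<dots> = \<beta> * D / (2 * K^2) * w x" unfolding c3_def w_def by (simp add: field_simps)
      finally show ?thesis .
    qed
    show ?thesis unfolding Cb_def using a1 a2 a3 a4 by (simp add: algebra_simps)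
  qed
  finally show ?thesis .
qed

end

context ctxs
begin

lemma Ac_nn: "Ac \<eta> \<ge> 0" unfolding Ac_def using \<gamma>0 \<gamma>1 by simp
lemma Bc_ge: "Bc \<eta> \<delta> \<ge> \<beta> / 2" unfolding Bc_def using \<gamma>0 \<gamma>1 by simp

lemma Lw: assumes t: "t > 0"
  shows "(\<beta> / 2 + \<gamma> * (1 - \<gamma>) * \<phi> t powr (\<gamma> - 2)) * w t \<le> Ac \<eta> * t powr q0 * exp (K * t) + Bc \<eta> \<delta> * w t"
proof (cases "t \<le> \<delta>")
  case True
  then have ph: "\<phi> t = exp (- \<eta>) * a * t powr \<beta>" unfolding \<phi>_def by simp
  have "\<phi> t powr (\<gamma> - 2) = (exp (- \<eta>) * a) powr (\<gamma> - 2) * (t powr \<beta>) powr (\<gamma> - 2)"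
    unfolding ph using apos t by (simp add: powr_mult)
  also have "(t powr \<beta>) powr (\<gamma> - 2) = t powr (- 2)" using \<beta>\<gamma>2 by (simp add: powr_powr)
  finally have e: "\<gamma> * (1 - \<gamma>) * \<phi> t powr (\<gamma> - 2) * w t = Ac \<eta> * (t powr (- 2) * t powr \<beta>) * exp (K * t)"
    unfolding Ac_def w_def by (simp add: algebra_simps)
  have e2: "Ac \<eta> * (t powr (- 2) * t powr \<beta>) = Ac \<eta> * t powr q0"
  proof (cases "\<gamma> = 0")
    case True then show ?thesis unfolding Ac_def by simp
  next
    case False
    then show ?thesis unfolding q0_def using t by (simp add: powr_add[symmetric])
  qed
  have "\<beta> / 2 * w t \<le> Bc \<eta> \<delta> * w t" using Bc_ge w_pos[OF t] by (intro mult_right_mono) auto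
  moreover have "\<gamma> * (1 - \<gamma>) * \<phi> t powr (\<gamma> - 2) * w t = Ac \<eta> * t powr q0 * exp (K * t)"
    using e e2 by (metis mult.assoc)
  ultimately show ?thesis by (simp add: distrib_right)
next
  case False
  then have "\<phi> t = exp (- \<eta>) * a * \<delta> powr \<beta>" unfolding \<phi>_def by simp
  then have "\<beta> / 2 + \<gamma> * (1 - \<gamma>) * \<phi> t powr (\<gamma> - 2) = Bc \<eta> \<delta>" unfolding Bc_def by simp
  moreover have "Ac \<eta> * t powr q0 * exp (K * t) \<ge> 0" using Ac_nn by simp
  ultimately show ?thesis by simp
qed

definition "cK = Ac \<eta> / (\<beta> * (\<beta> - 1)) + Bc \<eta> \<delta> / K^2"

lemma TT_contr:
  assumes U1: "adm U1 D1" and U2: "adm U2 D2" and dU: "\<And>t. t > 0 \<Longrightarrow> \<bar>U1 t - U2 t\<bar> \<le> \<Delta> * w t" and x: "x > 0"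
  shows "\<bar>TT U1 x - TT U2 x\<bar> \<le> cK * \<Delta> * w x"
proof -
  have "0 \<le> \<Delta> * w 1" using dU[of 1] by (meson abs_ge_zero order_trans zero_less_one)
  then have \<Delta>: "\<Delta> \<ge> 0" using w_pos[of 1] by (auto simp: zero_le_mult_iff)
  have K0: "K > 0" using K by simp
  define c1 where "c1 = \<Delta> * Ac \<eta> * exp (K * x)"
  define c3 where "c3 = \<Delta> * Bc \<eta> \<delta> * x powr \<beta>"
  define G where "G = (\<lambda>s. c1 * (s powr (q0 + 1) / (q0 + 1)) + 0 * s + c3 * ((exp (K * s) - 1) / K))"
  have G1: "((\<lambda>t. c1 * t powr q0 + 0 + c3 * exp (K * t)) has_integral G s) {0..s}" if "s \<ge> 0" for s
    unfolding G_def by (rule DBL(1)[OF q0 K0 order.refl that])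
  have G2: "(G has_integral (c1 * (x powr (q0 + 2) / ((q0 + 1) * (q0 + 2))) + 0 * (x^2 / 2)
            + c3 * ((exp (K * x) - 1) / K^2 - x / K))) {0..x}"
    unfolding G_def by (rule DBL(2)[OF q0 K0]) (use x in auto)
  have Fd: "\<bar>Ftr t (U1 t) - Ftr t (U2 t)\<bar> \<le> c1 * t powr q0 + 0 + c3 * exp (K * t)" if t: "t \<in> {0<..x}" for t
  proof -
    have tp: "t > 0" using t by auto
    have "\<bar>Ftr t (U1 t) - Ftr t (U2 t)\<bar> \<le> (\<beta> / 2 + \<gamma> * (1 - \<gamma>) * \<phi> t powr (\<gamma> - 2)) * \<bar>U1 t - U2 t\<bar>"
      by (rule Flip[OF tp])
    also have "\<dots> \<le> (\<beta> / 2 + \<gamma> * (1 - \<gamma>) * \<phi> t powr (\<gamma> - 2)) * (\<Delta> * w t)"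
      using dU[OF tp] \<gamma>0 \<gamma>1 \<beta>1 by (intro mult_left_mono) auto
    also have "\<dots> = \<Delta> * ((\<beta> / 2 + \<gamma> * (1 - \<gamma>) * \<phi> t powr (\<gamma> - 2)) * w t)" by simp
    also have "\<dots> \<le> \<Delta> * (Ac \<eta> * t powr q0 * exp (K * t) + Bc \<eta> \<delta> * w t)"
      using Lw[OF tp] \<Delta> by (intro mult_left_mono) auto
    also have "\<dots> \<le> \<Delta> * (Ac \<eta> * t powr q0 * exp (K * x) + Bc \<eta> \<delta> * (x powr \<beta> * exp (K * t)))"
    proof -
      have "Ac \<eta> * t powr q0 * exp (K * t) \<le> Ac \<eta> * t powr q0 * exp (K * x)"
        using Ac_nn t K by (intro mult_left_mono) auto
      moreover have "Bc \<eta> \<delta> * w t \<le> Bc \<eta> \<delta> * (x powr \<beta> * exp (K * t))"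
        unfolding w_def using Bc_ge \<beta>1 t by (intro mult_left_mono mult_right_mono powr_mono2) auto
      ultimately show ?thesis using \<Delta> by (intro mult_left_mono) auto
    qed
    finally show ?thesis unfolding c1_def c3_def by (simp add: algebra_simps)
  qed
  have Iint: "(\<lambda>t. \<rho> t * (Ftr t (U1 t) - Ftr t (U2 t))) integrable_on {0..s}" if "s \<ge> 0" for s
    using integrable_diff[OF integ_rF[OF U1 that] integ_rF[OF U2 that]] by (simp add: algebra_simps)
  have Idiff: "Iin U1 s - Iin U2 s = integral {0..s} (\<lambda>t. \<rho> t * (Ftr t (U1 t) - Ftr t (U2 t)))" if "s \<ge> 0" for s
    unfolding Iin_def using integral_diff[OF integ_rF[OF U1 that] integ_rF[OF U2 that]] by (simp add: algebra_simps)
  have inner: "\<bar>(Iin U1 s - Iin U2 s) / \<rho> s\<bar> \<le> G s" if s: "s \<in> {0..x}" for s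
  proof -
    have s0: "s \<ge> 0" using s by auto
    have "\<bar>integral {0..s} (\<lambda>t. \<rho> t * (Ftr t (U1 t) - Ftr t (U2 t)))\<bar> \<le> \<rho> s * G s"
      by (rule Jle[OF s0 Iint[OF s0] G1[OF s0]]) (use Fd s in auto)
    then have "\<bar>Iin U1 s - Iin U2 s\<bar> \<le> \<rho> s * G s" using Idiff[OF s0] by simp
    then show ?thesis using \<rho>pos[of s] by (simp add: divide_le_eq mult.commute)
  qed
  have c1: "continuous_on {0..x} (\<lambda>s. (c0 * \<rho> 0 + Iin U1 s) / \<rho> s)" by (rule TTi_cont[OF U1])
  have c2: "continuous_on {0..x} (\<lambda>s. (c0 * \<rho> 0 + Iin U2 s) / \<rho> s)" by (rule TTi_cont[OF U2])
  have eqf: "(\<lambda>s. (c0 * \<rho> 0 + Iin U1 s) / \<rho> s - (c0 * \<rho> 0 + Iin U2 s) / \<rho> s) = (\<lambda>s. (Iin U1 s - Iin U2 s) / \<rho> s)"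
    by (rule ext) (simp add: add_divide_distrib diff_divide_distrib)
  have "TT U1 x - TT U2 x = integral {0..x} (\<lambda>s. (Iin U1 s - Iin U2 s) / \<rho> s)"
    unfolding TT_def using integral_diff[OF integrable_continuous_interval[OF c1] integrable_continuous_interval[OF c2]]
    unfolding eqf by simp
  also have "\<bar>\<dots>\<bar> \<le> integral {0..x} G"
  proof (rule integral_norm_bound_integral[where 'a = real, unfolded real_norm_def])
    show "(\<lambda>s. (Iin U1 s - Iin U2 s) / \<rho> s) integrable_on {0..x}"
      using integrable_diff[OF integrable_continuous_interval[OF c1] integrable_continuous_interval[OF c2]]
      unfolding eqf .
    show "G integrable_on {0..x}" using G2 by blast
  qed (use inner in auto)
  also have "integral {0..x} G = c1 * (x powr (q0 + 2) / ((q0 + 1) * (q0 + 2))) + c3 * ((exp (K * x) - 1) / K^2 - x / K)"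
    using integral_unique[OF G2] by simp
  also have "\<dots> \<le> cK * \<Delta> * w x"
  proof -
    have a1: "c1 * (x powr (q0 + 2) / ((q0 + 1) * (q0 + 2))) = \<Delta> * (Ac \<eta> / (\<beta> * (\<beta> - 1))) * w x"
    proof (cases "\<gamma> = 0")
      case True then show ?thesis unfolding c1_def Ac_def by simp
    next
      case False
      then have q: "q0 = \<beta> - 2" unfolding q0_def by auto
      have "x powr (q0 + 2) = x powr \<beta>" "(q0 + 1) * (q0 + 2) = \<beta> * (\<beta> - 1)" unfolding q by (auto simp: algebra_simps)
      then show ?thesis unfolding c1_def w_def by simp
    qed
    have a2: "c3 * ((exp (K * x) - 1) / K^2 - x / K) \<le> \<Delta> * (Bc \<eta> \<delta> / K^2) * w x"
    proof -
      have "(exp (K * x) - 1) / K^2 \<le> exp (K * x) / K^2" using K0 by (intro divide_right_mono) auto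
      moreover have "x / K \<ge> 0" using x K0 by simp
      ultimately have "(exp (K * x) - 1) / K^2 - x / K \<le> exp (K * x) / K^2" by linarith
      moreover have "c3 \<ge> 0" unfolding c3_def using \<Delta> Bc_ge \<beta>1 by simp
      ultimately have "c3 * ((exp (K * x) - 1) / K^2 - x / K) \<le> c3 * (exp (K * x) / K^2)" by (rule mult_left_mono)
      also have "\<dots> = \<Delta> * (Bc \<eta> \<delta> / K^2) * w x" unfolding c3_def w_def by (simp add: field_simps)
      finally show ?thesis .
    qed
    show ?thesis unfolding cK_def using a1 a2 by (simp add: algebra_simps)
  qed
  finally show ?thesis .
qed

end

context ctxs
begin

lemma mainterm: assumes g: "\<gamma> > 0"
  shows "\<gamma> * (exp m * a) powr (\<gamma> - 1) / (\<beta> * (\<beta> - 1)) = exp (m * (\<gamma> - 1)) * a"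
proof -
  have b: "\<beta> * (\<beta> - 1) > 0" using \<beta>gt1[OF g] by simp
  have "\<gamma> * (exp m * a) powr (\<gamma> - 1) = exp (m * (\<gamma> - 1)) * (\<gamma> * a powr (\<gamma> - 1))"
  proof -
    have "(exp m * a) powr (\<gamma> - 1) = exp m powr (\<gamma> - 1) * a powr (\<gamma> - 1)" using apos by (simp add: powr_mult)
    moreover have "exp m powr (\<gamma> - 1) = exp (m * (\<gamma> - 1))" by (simp add: powr_def)
    ultimately show ?thesis by simp
  qed
  also have "\<dots> = exp (m * (\<gamma> - 1)) * a * (\<beta> * (\<beta> - 1))" using a\<gamma>[OF g] by simp
  finally have "\<gamma> * (exp m * a) powr (\<gamma> - 1) = exp (m * (\<gamma> - 1)) * a * (\<beta> * (\<beta> - 1))" .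
  moreover have "\<beta> * (\<beta> - 1) \<noteq> 0" using b by (metis less_irrefl)
  ultimately show ?thesis by (metis nonzero_mult_div_cancel_right)
qed

lemma TT_self:
  assumes U: "adm U D" and M: "0 \<le> M" "M \<le> \<eta>" and d: "0 < d" "d \<le> \<delta>"
    and bnd: "\<And>t. 0 < t \<Longrightarrow> t \<le> d \<Longrightarrow> exp (- M) * a * t powr \<beta> \<le> U t \<and> U t \<le> exp M * a * t powr \<beta>"
    and x: "0 < x" "x \<le> d"
  shows "\<rho> 0 / \<rho> d * exp (- (kk * M)) * a * x powr \<beta> \<le> TT U x"
    and "TT U x \<le> (exp (kk * M) + \<beta> * exp M * d^2 / 4) * a * x powr \<beta>"
proof -
  have K0: "K > 0" using K by simp
  have Feq: "Ftr t (U t) = \<beta> / 2 * U t + \<gamma> * U t powr (\<gamma> - 1)" if t: "0 < t" "t \<le> x" for t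
  proof -
    have "\<phi> t = exp (- \<eta>) * a * t powr \<beta>" unfolding \<phi>_def using t x d by simp
    also have "\<dots> \<le> exp (- M) * a * t powr \<beta>" using M apos by (intro mult_right_mono) auto
    also have "\<dots> \<le> U t" using bnd[of t] t x by auto
    finally show ?thesis unfolding Ftr_def by (simp add: max_def)
  qed
  have Upos: "U t > 0" if t: "0 < t" "t \<le> x" for t
  proof -
    have "0 < exp (- M) * a * t powr \<beta>" using apos t by simp
    also have "\<dots> \<le> U t" using bnd[of t] t x by auto
    finally show ?thesis .
  qed
  define cU where "cU = \<gamma> * (exp (- M) * a) powr (\<gamma> - 1)"
  define cL where "cL = \<gamma> * (exp M * a) powr (\<gamma> - 1)"
  define c2 where "c2 = \<beta> / 2 * exp M * a * x powr \<beta>"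
  have cU: "cU \<ge> 0" "cL \<ge> 0" unfolding cU_def cL_def using \<gamma>0 by auto
  have tpow: "\<gamma> * (c * t powr \<beta>) powr (\<gamma> - 1) = \<gamma> * c powr (\<gamma> - 1) * t powr q0" if "c > 0" "t > 0" for c t
  proof (cases "\<gamma> = 0")
    case False
    then show ?thesis unfolding q0_def using that \<beta>\<gamma>1 by (simp add: powr_mult powr_powr)
  qed simp
  have Fup: "\<bar>Ftr t (U t)\<bar> \<le> cU * t powr q0 + c2 + 0 * exp (K * t)" if t: "t \<in> {0<..<s}" "s \<le> x" for t s
  proof -
    have t': "0 < t" "t \<le> x" using t by auto
    have bt: "exp (- M) * a * t powr \<beta> \<le> U t" "U t \<le> exp M * a * t powr \<beta>" using bnd[of t] t' x by auto
    have "\<gamma> * U t powr (\<gamma> - 1) \<le> \<gamma> * (exp (- M) * a * t powr \<beta>) powr (\<gamma> - 1)"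
      using bt(1) \<gamma>0 \<gamma>1 apos t' by (intro mult_left_mono powr_mono2') auto
    also have "\<dots> = cU * t powr q0" unfolding cU_def using tpow[of "exp (- M) * a" t] apos t' by simp
    finally have A: "\<gamma> * U t powr (\<gamma> - 1) \<le> cU * t powr q0" .
    have "\<beta> / 2 * U t \<le> \<beta> / 2 * (exp M * a * t powr \<beta>)" using bt(2) \<beta>1 by (intro mult_left_mono) auto
    also have "\<dots> \<le> \<beta> / 2 * (exp M * a * x powr \<beta>)" using t' \<beta>1 apos by (intro mult_left_mono powr_mono2) auto
    finally have B: "\<beta> / 2 * U t \<le> c2" unfolding c2_def by simp
    have "Ftr t (U t) \<ge> 0" unfolding Feq[OF t'] using Upos[OF t'] \<beta>1 \<gamma>0 by auto
    then show ?thesis unfolding Feq[OF t'] using A B Feq[OF t'] by simp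
  qed
  have Flow: "0 \<le> cL * t powr q0 \<and> cL * t powr q0 \<le> Ftr t (U t)" if t: "t \<in> {0<..<s}" "s \<le> x" for t s
  proof -
    have t': "0 < t" "t \<le> x" using t by auto
    have bt: "U t \<le> exp M * a * t powr \<beta>" using bnd[of t] t' x by auto
    have "\<gamma> * (exp M * a * t powr \<beta>) powr (\<gamma> - 1) \<le> \<gamma> * U t powr (\<gamma> - 1)"
      using bt Upos[OF t'] \<gamma>0 \<gamma>1 by (intro mult_left_mono powr_mono2') auto
    moreover have "\<gamma> * (exp M * a * t powr \<beta>) powr (\<gamma> - 1) = cL * t powr q0"
      unfolding cL_def using tpow[of "exp M * a" t] apos t' by simp
    moreover have "0 \<le> \<beta> / 2 * U t" using Upos[OF t'] \<beta>1 by simp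
    ultimately show ?thesis unfolding Feq[OF t'] using cU by simp
  qed
  define G where "G = (\<lambda>s. cU * (s powr (q0 + 1) / (q0 + 1)) + c2 * s + 0 * ((exp (K * s) - 1) / K))"
  have G1: "((\<lambda>t. cU * t powr q0 + c2 + 0 * exp (K * t)) has_integral G s) {0..s}" if "s \<ge> 0" for s
    unfolding G_def by (rule DBL(1)[OF q0 K0 order.refl that])
  have G2: "((\<lambda>s. c0 + G s) has_integral (c0 * x + (cU * (x powr (q0 + 2) / ((q0 + 1) * (q0 + 2))) + c2 * (x^2 / 2)
            + 0 * ((exp (K * x) - 1) / K^2 - x / K)))) {0..x}"
    unfolding G_def by (intro has_integral_add HIconst DBL(2)[OF q0 K0, unfolded add.assoc[symmetric]]) (use x in auto)
  define GL where "GL = (\<lambda>s. cL * (s powr (q0 + 1) / (q0 + 1)) + 0 * s + 0 * ((exp (K * s) - 1) / K))"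
  have GL1: "((\<lambda>t. cL * t powr q0 + 0 + 0 * exp (K * t)) has_integral GL s) {0..s}" if "s \<ge> 0" for s
    unfolding GL_def by (rule DBL(1)[OF q0 K0 order.refl that])
  have GL2: "((\<lambda>s. \<rho> 0 / \<rho> d * (c0 + GL s)) has_integral (\<rho> 0 / \<rho> d * (c0 * x + (cL * (x powr (q0 + 2) / ((q0 + 1) * (q0 + 2))) + 0 * (x^2 / 2)
            + 0 * ((exp (K * x) - 1) / K^2 - x / K))))) {0..x}"
    unfolding GL_def by (intro has_integral_mult_right has_integral_add HIconst DBL(2)[OF q0 K0, unfolded add.assoc[symmetric]]) (use x in auto)
  have c0nn: "c0 \<ge> 0" unfolding c0_def by simp
  show "TT U x \<le> (exp (kk * M) + \<beta> * exp M * d^2 / 4) * a * x powr \<beta>"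
  proof -
    have "TT U x \<le> c0 * x + (cU * (x powr (q0 + 2) / ((q0 + 1) * (q0 + 2))) + c2 * (x^2 / 2)
            + 0 * ((exp (K * x) - 1) / K^2 - x / K))"
      unfolding TT_def
    proof (rule outer_le[OF TTi_cont[OF U] G2])
      fix s assume s: "s \<in> {0..x}"
      then have s0: "s \<ge> 0" by auto
      have "\<bar>Iin U s\<bar> \<le> \<rho> s * G s" unfolding Iin_def
        by (rule Jle[OF s0 integ_rF[OF U s0] G1[OF s0]]) (use Fup s in auto)
      then have "Iin U s / \<rho> s \<le> G s" using \<rho>pos[of s] by (simp add: divide_le_eq mult.commute abs_le_iff)
      moreover have "c0 * \<rho> 0 / \<rho> s \<le> c0" using \<rho>mono[of 0 s] s0 \<rho>pos[of s] c0nn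
        by (simp add: divide_le_eq mult_left_mono)
      ultimately show "(c0 * \<rho> 0 + Iin U s) / \<rho> s \<le> c0 + G s" by (simp add: add_divide_distrib)
    qed
    also have "\<dots> = c0 * x + cU * (x powr (q0 + 2) / ((q0 + 1) * (q0 + 2))) + c2 * (x^2 / 2)" by simp
    also have "c0 * x + cU * (x powr (q0 + 2) / ((q0 + 1) * (q0 + 2))) = exp (kk * M) * a * x powr \<beta>"
    proof (cases "\<gamma> = 0")
      case True then show ?thesis using \<gamma>zero[OF True] x unfolding cU_def kk_def by simp
    next
      case False
      then have g: "\<gamma> > 0" using \<gamma>0 by simp
      have q: "q0 = \<beta> - 2" unfolding q0_def using False by simp
      have "cU * (x powr (q0 + 2) / ((q0 + 1) * (q0 + 2))) = (cU / (\<beta> * (\<beta> - 1))) * x powr \<beta>"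
        unfolding q by (simp add: algebra_simps)
      also have "cU / (\<beta> * (\<beta> - 1)) = exp (- M * (\<gamma> - 1)) * a"
        unfolding cU_def using mainterm[OF g, of "- M"] by simp
      finally show ?thesis unfolding c0_def kk_def using False by (simp add: algebra_simps)
    qed
    also have "c2 * (x^2 / 2) \<le> \<beta> * exp M * d^2 / 4 * a * x powr \<beta>"
    proof -
      have "x^2 \<le> d^2" using x by (intro power_mono) auto
      then have "c2 * (x^2 / 2) \<le> c2 * (d^2 / 2)" unfolding c2_def using \<beta>1 apos by (intro mult_left_mono) auto
      then show ?thesis unfolding c2_def by (simp add: algebra_simps)
    qed
    finally show ?thesis by (simp add: algebra_simps)
  qed
  show "\<rho> 0 / \<rho> d * exp (- (kk * M)) * a * x powr \<beta> \<le> TT U x"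
  proof -
    have "\<rho> 0 / \<rho> d * (c0 * x + (cL * (x powr (q0 + 2) / ((q0 + 1) * (q0 + 2))) + 0 * (x^2 / 2)
            + 0 * ((exp (K * x) - 1) / K^2 - x / K))) \<le> TT U x"
      unfolding TT_def
    proof (rule outer_ge[OF TTi_cont[OF U] GL2])
      fix s assume s: "s \<in> {0..x}"
      then have s0: "s \<ge> 0" by auto
      have "\<rho> 0 * GL s \<le> Iin U s" unfolding Iin_def
        by (rule Jge[OF s0 integ_rF[OF U s0] GL1[OF s0]]) (use Flow s in auto)
      then have "\<rho> 0 * (c0 + GL s) \<le> c0 * \<rho> 0 + Iin U s" by (simp add: algebra_simps)
      moreover have "c0 + GL s \<ge> 0" unfolding GL_def using c0nn cU s0 q0 by simp
      moreover have "\<rho> s \<le> \<rho> d" using \<rho>mono[of s d] s x s0 by auto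
      ultimately have "\<rho> 0 * (c0 + GL s) / \<rho> d \<le> (c0 * \<rho> 0 + Iin U s) / \<rho> s"
        using \<rho>pos[of s] \<rho>pos[of d] \<rho>pos[of 0]
        by (meson divide_left_mono divide_right_mono mult_pos_pos order_trans mult_nonneg_nonneg less_imp_le)
      then show "\<rho> 0 / \<rho> d * (c0 + GL s) \<le> (c0 * \<rho> 0 + Iin U s) / \<rho> s" by simp
    qed
    moreover have V: "c0 * x + (cL * (x powr (q0 + 2) / ((q0 + 1) * (q0 + 2))) + 0 * (x^2 / 2)
            + 0 * ((exp (K * x) - 1) / K^2 - x / K)) = exp (- (kk * M)) * a * x powr \<beta>"
    proof (cases "\<gamma> = 0")
      case True then show ?thesis using \<gamma>zero[OF True] x unfolding cL_def kk_def by simp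
    next
      case False
      then have g: "\<gamma> > 0" using \<gamma>0 by simp
      have q: "q0 = \<beta> - 2" unfolding q0_def using False by simp
      have "cL * (x powr (q0 + 2) / ((q0 + 1) * (q0 + 2))) = (cL / (\<beta> * (\<beta> - 1))) * x powr \<beta>"
        unfolding q by (simp add: algebra_simps)
      also have "cL / (\<beta> * (\<beta> - 1)) = exp (M * (\<gamma> - 1)) * a"
        unfolding cL_def using mainterm[OF g, of M] by simp
      finally show ?thesis unfolding c0_def kk_def using False by (simp add: algebra_simps)
    qed
    ultimately have "\<rho> 0 / \<rho> d * (exp (- (kk * M)) * a * x powr \<beta>) \<le> TT U x" by metis
    then show ?thesis by (simp only: mult.assoc)
  qed
qed

end

context ctxs
begin

definition "toU H x = (if 0 < x then w x * apply_bcontfun H (ln x) else 0)"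
definition "lo t = exp (- \<eta>) * a * exp (- K * exp t)"
definition "hi t = exp \<eta> * a * exp (- K * exp t)"
definition "Sset = PiC UNIV (\<lambda>t. if t \<le> ln \<delta> then {lo t..hi t} else UNIV)"
definition "Phi H = Bcontfun (\<lambda>t. TT (toU H) (exp t) / w (exp t))"

lemma w_exp: "x > 0 \<Longrightarrow> w x * exp (- K * x) = x powr \<beta>"
  unfolding w_def by (simp add: mult.assoc exp_add[symmetric])

lemma toU_cont: "continuous_on {0<..} (toU H)"
proof -
  have "continuous_on {0<..} (\<lambda>x. w x * apply_bcontfun H (ln x))"
    by (intro continuous_on_mult w_cont continuous_on_compose2[OF continuous_on_apply_bcontfun[of UNIV H]] continuous_on_ln)
       auto
  then show ?thesis unfolding toU_def by (rule continuous_on_cong[THEN iffD1, rotated 2]) auto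
qed

lemma adm_toU: assumes H: "H \<in> Sset" shows "adm (toU H) (norm H)"
  unfolding adm_def
proof (intro conjI allI impI)
  show "continuous_on {0<..} (toU H)" by (rule toU_cont)
  fix x :: real
  {
    assume x: "x > 0"
    have "\<bar>toU H x\<bar> = w x * \<bar>apply_bcontfun H (ln x)\<bar>" unfolding toU_def using x w_pos[OF x] by (simp add: abs_mult)
    also have "\<dots> \<le> w x * norm H" using norm_bounded[of H "ln x"] w_pos[OF x] by (intro mult_left_mono) auto
    finally show "\<bar>toU H x\<bar> \<le> norm H * w x" by (simp add: mult.commute)
  }
  assume x: "0 < x \<and> x \<le> \<delta>"
  then have "ln x \<le> ln \<delta>" using \<delta> by simp
  moreover have "apply_bcontfun H (ln x) \<in> (if ln x \<le> ln \<delta> then {lo (ln x)..hi (ln x)} else UNIV)"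
    using mem_PiCD[OF H[unfolded Sset_def]] by (auto simp: Pi_iff)
  ultimately have "apply_bcontfun H (ln x) \<in> {lo (ln x)..hi (ln x)}" by simp
  then have "w x * lo (ln x) \<le> toU H x \<and> toU H x \<le> w x * hi (ln x)"
    unfolding toU_def using x w_pos[of x] by (auto intro: mult_left_mono)
  moreover have "w x * lo (ln x) = exp (- \<eta>) * a * x powr \<beta>" "w x * hi (ln x) = exp \<eta> * a * x powr \<beta>"
    unfolding lo_def hi_def using x w_exp[of x] by (auto simp: algebra_simps)
  ultimately have both: "exp (- \<eta>) * a * x powr \<beta> \<le> toU H x \<and> toU H x \<le> exp \<eta> * a * x powr \<beta>" by simp
  then show "exp (- \<eta>) * a * x powr \<beta> \<le> toU H x" by simp
  from both show "toU H x \<le> exp \<eta> * a * x powr \<beta>" by simp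
qed

lemma Phi_in: assumes H: "H \<in> Sset"
  shows "(\<lambda>t. TT (toU H) (exp t) / w (exp t)) \<in> bcontfun"
proof (rule bcontfun_normI)
  have U: "adm (toU H) (norm H)" by (rule adm_toU[OF H])
  have "continuous_on UNIV (\<lambda>t. TT (toU H) (exp t))"
  proof (intro continuous_at_imp_continuous_on ballI)
    fix t :: real
    show "isCont (\<lambda>t. TT (toU H) (exp t)) t"
      by (rule isCont_o2[OF _ TT_isCont[OF U]]) (auto intro!: continuous_intros)
  qed
  moreover have "continuous_on UNIV (\<lambda>t. w (exp t))"
    by (intro continuous_on_compose2[OF w_cont]) (auto intro!: continuous_intros)
  ultimately show "continuous_on UNIV (\<lambda>t. TT (toU H) (exp t) / w (exp t))"
    using w_pos by (intro continuous_on_divide) (auto simp: less_imp_neq[symmetric])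
  fix t
  have "\<bar>TT (toU H) (exp t)\<bar> \<le> Cb (norm H) * w (exp t)" by (rule TT_bound[OF U]) simp
  then show "norm (TT (toU H) (exp t) / w (exp t)) \<le> Cb (norm H)"
    using w_pos[of "exp t"] by (simp add: divide_le_eq)
qed

lemma Phi_apply: "H \<in> Sset \<Longrightarrow> apply_bcontfun (Phi H) t = TT (toU H) (exp t) / w (exp t)"
  unfolding Phi_def using Phi_in by (simp add: Bcontfun_inverse)

lemma Phi_maps1: assumes H: "H \<in> Sset" and t: "t \<le> ln \<delta>"
  shows "apply_bcontfun (Phi H) t \<in> {lo t..hi t}"
proof -
  define x where "x = exp t"
  have x: "0 < x" "x \<le> \<delta>" unfolding x_def using t \<delta> by (auto simp: ln_ge_iff[symmetric] exp_le_cancel_iff)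
  have U: "adm (toU H) (norm H)" by (rule adm_toU[OF H])
  have bnd: "exp (- \<eta>) * a * s powr \<beta> \<le> toU H s \<and> toU H s \<le> exp \<eta> * a * s powr \<beta>" if "0 < s" "s \<le> \<delta>" for s
    using U that unfolding adm_def by auto
  note TS = TT_self[OF U _ order.refl \<delta> order.refl bnd x]
  have lo: "exp (- \<eta>) * a * x powr \<beta> \<le> TT (toU H) x"
  proof -
    have "exp (- \<eta>) = exp (- (1 - kk) * \<eta>) * exp (- (kk * \<eta>))" by (simp add: exp_add[symmetric] algebra_simps)
    also have "\<dots> \<le> \<rho> 0 / \<rho> \<delta> * exp (- (kk * \<eta>))" using self1 by (intro mult_right_mono) auto
    finally have "exp (- \<eta>) * (a * x powr \<beta>) \<le> \<rho> 0 / \<rho> \<delta> * exp (- (kk * \<eta>)) * (a * x powr \<beta>)"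
      using apos by (intro mult_right_mono) auto
    then show ?thesis using TS(1) \<eta> by (simp add: mult.assoc)
  qed
  have hi: "TT (toU H) x \<le> exp \<eta> * a * x powr \<beta>"
  proof -
    have "(exp (kk * \<eta>) + \<beta> * exp \<eta> * \<delta>^2 / 4) * (a * x powr \<beta>) \<le> exp \<eta> * (a * x powr \<beta>)"
      using self2 apos by (intro mult_right_mono) auto
    then show ?thesis using TS(2) \<eta> by (simp add: mult.assoc)
  qed
  have wx: "w x > 0" by (rule w_pos[OF x(1)])
  have "lo t = exp (- \<eta>) * a * x powr \<beta> / w x" unfolding lo_def x_def using w_exp[of x] wx x_def
    by (simp add: field_simps)
  moreover have "hi t = exp \<eta> * a * x powr \<beta> / w x" unfolding hi_def x_def using w_exp[of x] wx x_def
    by (simp add: field_simps)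
  ultimately show "apply_bcontfun (Phi H) t \<in> {lo t..hi t}"
    unfolding Phi_apply[OF H] x_def[symmetric] using lo hi wx by (auto intro: divide_right_mono)
qed

lemma Phi_maps: assumes H: "H \<in> Sset" shows "Phi H \<in> Sset"
  unfolding Sset_def by (intro mem_PiCI Pi_I) (use Phi_maps1[OF H] in auto)

lemma Phi_contr: assumes H1: "H1 \<in> Sset" and H2: "H2 \<in> Sset"
  shows "dist (Phi H1) (Phi H2) \<le> cK * dist H1 H2"
proof (rule dist_bound)
  fix t :: real
  define x where "x = exp t"
  have x: "x > 0" unfolding x_def by simp
  have dU: "\<bar>toU H1 s - toU H2 s\<bar> \<le> dist H1 H2 * w s" if "s > 0" for s
  proof -
    have "\<bar>toU H1 s - toU H2 s\<bar> = w s * dist (apply_bcontfun H1 (ln s)) (apply_bcontfun H2 (ln s))"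
      unfolding toU_def dist_real_def using that w_pos[OF that] by (simp add: abs_mult right_diff_distrib[symmetric])
    also have "\<dots> \<le> w s * dist H1 H2" using dist_bounded w_pos[OF that] by (intro mult_left_mono) auto
    finally show ?thesis by (simp add: mult.commute)
  qed
  have "\<bar>TT (toU H1) x - TT (toU H2) x\<bar> \<le> cK * dist H1 H2 * w x"
    by (rule TT_contr[OF adm_toU[OF H1] adm_toU[OF H2] dU x])
  then show "dist (apply_bcontfun (Phi H1) t) (apply_bcontfun (Phi H2) t) \<le> cK * dist H1 H2"
    unfolding Phi_apply[OF H1] Phi_apply[OF H2] dist_real_def x_def[symmetric] using w_pos[OF x]
    by (simp add: diff_divide_distrib[symmetric] divide_le_eq)
qed

lemma Sset_closed: "closed Sset"
  unfolding Sset_def by (rule closed_PiC) auto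

lemma H0_in: "Bcontfun (\<lambda>t. a * exp (- K * exp t)) \<in> Sset"
proof -
  have b: "(\<lambda>t. a * exp (- K * exp t)) \<in> bcontfun"
  proof (rule bcontfun_normI)
    show "continuous_on UNIV (\<lambda>t. a * exp (- K * exp t))" by (intro continuous_intros)
    fix t show "norm (a * exp (- K * exp t)) \<le> a" using apos K by (simp add: abs_mult)
  qed
  have "apply_bcontfun (Bcontfun (\<lambda>t. a * exp (- K * exp t))) t \<in> {lo t..hi t}" for t
  proof -
    have "exp (- \<eta>) \<le> 1" "1 \<le> exp \<eta>" using \<eta> by auto
    then have "exp (- \<eta>) * (a * exp (- K * exp t)) \<le> 1 * (a * exp (- K * exp t))"
      "1 * (a * exp (- K * exp t)) \<le> exp \<eta> * (a * exp (- K * exp t))"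
      using apos by (intro mult_right_mono; simp)+
    then show ?thesis unfolding lo_def hi_def Bcontfun_inverse[OF b] by (simp add: mult.assoc)
  qed
  then show ?thesis unfolding Sset_def by (intro mem_PiCI Pi_I) auto
qed

lemma cK: "0 \<le> cK" "cK < 1"
proof -
  have "\<beta> * (\<beta> - 1) \<ge> 0" using \<beta>1 by simp
  then show "0 \<le> cK" unfolding cK_def using Ac_nn Bc_ge \<beta>1 by (intro add_nonneg_nonneg divide_nonneg_nonneg) auto
  show "cK < 1" unfolding cK_def using contr .
qed

lemma fixpoint: "\<exists>H\<in>Sset. Phi H = H"
proof -
  have "\<exists>!H\<in>Sset. Phi H = H"
  proof (rule Banach_fix[OF _ _ cK])
    show "complete Sset" using Sset_closed by (simp add: complete_eq_closed)
    show "Sset \<noteq> {}" using H0_in by auto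
    show "Phi ` Sset \<subseteq> Sset" using Phi_maps by auto
  qed (rule Phi_contr)
  then show ?thesis by auto
qed

end

locale ctxf = ctxs +
  fixes H
  assumes HS: "H \<in> Sset" and Hfix: "Phi H = H"
begin

definition "V = toU H"
definition "V1 x = (c0 * \<rho> 0 + Iin V x) / \<rho> x"
definition "V2 x = Ftr x (V x) - ((real n - 1) / (R + x) + (R + x) / 2) * V1 x"

lemma Vadm: "adm V (norm H)" unfolding V_def by (rule adm_toU[OF HS])

lemma V0: "V 0 = 0" unfolding V_def toU_def by simp

lemma VTT: assumes "x \<ge> 0" shows "TT V x = V x"
proof (cases "x = 0")
  case True then show ?thesis using V0 by (simp add: TT_def)
next
  case False
  then have x: "x > 0" using assms by simp
  have "apply_bcontfun (Phi H) (ln x) = apply_bcontfun H (ln x)" using Hfix by simp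
  then have "TT V x / w x = apply_bcontfun H (ln x)" unfolding Phi_apply[OF HS] V_def using x by simp
  then show ?thesis unfolding V_def toU_def using x w_pos[OF x] by (simp add: divide_eq_eq mult.commute)
qed

lemma Vcont: "continuous_on {0..} V"
  using TT_cont'[OF Vadm] by (rule continuous_on_cong[THEN iffD1, rotated 2]) (auto simp: VTT)

lemma Vbnd: "0 < x \<Longrightarrow> x \<le> \<delta> \<Longrightarrow> exp (- \<eta>) * a * x powr \<beta> \<le> V x \<and> V x \<le> exp \<eta> * a * x powr \<beta>"
  using Vadm unfolding adm_def by auto

lemma Vder: assumes x: "x > 0" shows "(V has_real_derivative V1 x) (at x)"
  unfolding V1_def
proof (rule has_field_derivative_transform_within_open[OF TT_der[OF Vadm x], of "{0<..}"])
  show "\<And>y. y \<in> {0<..} \<Longrightarrow> TT V y = V y" using VTT by auto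
qed (use x in auto)

lemma V1der: assumes x: "x > 0" shows "(V1 has_real_derivative V2 x) (at x)"
proof -
  have "(V1 has_real_derivative (\<rho> x * Ftr x (V x) * \<rho> x - (c0 * \<rho> 0 + Iin V x) * (\<rho> x * ((real n - 1) / (R + x) + (R + x) / 2))) / (\<rho> x * \<rho> x)) (at x)"
  proof -
    have d1: "((\<lambda>x. c0 * \<rho> 0 + Iin V x) has_real_derivative 0 + \<rho> x * Ftr x (V x)) (at x)"
      by (intro DERIV_add DERIV_const Iin_der[OF Vadm x])
    have d2: "(\<rho> has_real_derivative \<rho> x * ((real n - 1) / (R + x) + (R + x) / 2)) (at x)"
      using \<rho>der[of x] x R by simp
    show ?thesis unfolding V1_def using DERIV_divide[OF d1 d2 \<rho>ne] by simp
  qed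
  then show ?thesis
  proof (rule DERIV_cong)
    have alg: "p \<noteq> 0 \<Longrightarrow> (p * F * p - A * (p * k)) / (p * p) = F - k * (A / p)" for p F A k :: real
      by (simp add: field_simps)
    show "(\<rho> x * Ftr x (V x) * \<rho> x - (c0 * \<rho> 0 + Iin V x) * (\<rho> x * ((real n - 1) / (R + x) + (R + x) / 2))) / (\<rho> x * \<rho> x) = V2 x"
      unfolding V2_def V1_def by (rule alg) simp
  qed
qed

lemma V1cont: "continuous_on {0<..} V1"
proof -
  have "continuous_on {0..X} V1" for X unfolding V1_def by (rule TTi_cont[OF Vadm])
  then have "isCont V1 x" if "x > 0" for x
    using continuous_on_interior[of "{0..x+1}" V1 x] that by auto
  then show ?thesis by (intro continuous_at_imp_continuous_on) auto
qed

lemma V2cont: "continuous_on {0<..} V2"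
  unfolding V2_def using R
  by (intro continuous_intros Ftr_cont0[OF adm_cont[OF Vadm]] V1cont continuous_on_id) auto

lemma Iin_pos: assumes x: "x > 0" and pos: "\<And>t. 0 < t \<Longrightarrow> t < x \<Longrightarrow> V t > 0" shows "Iin V x > 0"
proof -
  have "Iin V 0 < Iin V x"
  proof (rule DERIV_pos_imp_increasing_open[OF x])
    fix t assume t: "0 < t" "t < x"
    have "Ftr t (V t) > 0"
    proof -
      have "\<beta> / 2 * V t > 0" using pos[OF t] \<beta>1 by simp
      moreover have "\<gamma> * max (V t) (\<phi> t) powr (\<gamma> - 1) \<ge> 0" using \<gamma>0 by simp
      ultimately show ?thesis unfolding Ftr_def by linarith
    qed
    then show "\<exists>y. (Iin V has_real_derivative y) (at t) \<and> 0 < y"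
      using Iin_der[OF Vadm t(1)] \<rho>pos[of t] by (intro exI[of _ "\<rho> t * Ftr t (V t)"]) auto
  next
    show "continuous_on {0..x} (Iin V)" by (rule Iin_cont[OF Vadm])
  qed
  then show ?thesis unfolding Iin_def by simp
qed

lemma V1_pos: assumes x: "x > 0" and pos: "\<And>t. 0 < t \<Longrightarrow> t < x \<Longrightarrow> V t > 0" shows "V1 x > 0"
proof -
  have "c0 * \<rho> 0 \<ge> 0" unfolding c0_def using \<rho>pos[of 0] by simp
  then show ?thesis unfolding V1_def using Iin_pos[OF x pos] \<rho>pos[of x] by (intro divide_pos_pos) auto
qed

lemma Vpos: assumes x: "x > 0" shows "V x > 0"
proof (rule ccontr)
  assume "\<not> V x > 0"
  then have Vx: "V x \<le> 0" by simp
  have Vd: "V t > 0" if "0 < t" "t \<le> \<delta>" for t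
  proof -
    have "0 < exp (- \<eta>) * a * t powr \<beta>" using apos that by simp
    then show ?thesis using Vbnd[OF that] by linarith
  qed
  then have xd: "x > \<delta>" using x Vx by force
  define Z where "Z = {t \<in> {\<delta>..x}. V t \<le> 0}"
  have Zc: "compact Z"
  proof -
    have "continuous_on {\<delta>..x} V" by (rule continuous_on_subset[OF Vcont]) (use \<delta> in auto)
    moreover have "Z = {\<delta>..x} \<inter> V -` {..0}" unfolding Z_def by auto
    ultimately have "closed Z" using continuous_closed_preimage[of "{\<delta>..x}" V "{..0}"] by auto
    moreover have "bounded Z" unfolding Z_def by (rule bounded_subset[of "{\<delta>..x}"]) auto
    ultimately show ?thesis by (simp add: compact_eq_bounded_closed)
  qed
  have Zne: "Z \<noteq> {}" unfolding Z_def using xd Vx by auto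
  obtain s where s: "s \<in> Z" "\<And>t. t \<in> Z \<Longrightarrow> s \<le> t"
    using compact_attains_inf[OF Zc Zne] by blast
  have s1: "\<delta> \<le> s" "s \<le> x" "V s \<le> 0" using s(1) unfolding Z_def by auto
  have sd: "s > \<delta>" using s1 Vd[OF \<delta> order.refl] by (cases "s = \<delta>") auto
  have posb: "V t > 0" if "0 < t" "t < s" for t
  proof (cases "t \<le> \<delta>")
    case True then show ?thesis using Vd that by auto
  next
    case False
    then have "t \<notin> Z" using s(2)[of t] that by force
    then show ?thesis unfolding Z_def using False that s1 by auto
  qed
  have "V \<delta> < V s"
  proof (rule DERIV_pos_imp_increasing_open[OF sd])
    fix t assume t: "\<delta> < t" "t < s"
    have tp: "t > 0" using t \<delta> by simp
    show "\<exists>y. (V has_real_derivative y) (at t) \<and> 0 < y"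
      using Vder[OF tp] V1_pos[OF tp] posb t by (intro exI[of _ "V1 t"]) auto
  next
    show "continuous_on {\<delta>..s} V" by (rule continuous_on_subset[OF Vcont]) (use \<delta> in auto)
  qed
  then show False using Vd[OF \<delta> order.refl] s1 by linarith
qed

lemma V1pos: "x > 0 \<Longrightarrow> V1 x > 0" using V1_pos Vpos by blast

lemma Vmono: assumes "0 < x" "x < y" shows "V x < V y"
proof (rule DERIV_pos_imp_increasing_open[OF assms(2)])
  fix t assume t: "x < t" "t < y"
  then show "\<exists>z. (V has_real_derivative z) (at t) \<and> 0 < z" using Vder V1pos assms by (intro exI[of _ "V1 t"]) auto
next
  show "continuous_on {x..y} V" by (rule continuous_on_subset[OF Vcont]) (use assms in auto)
qed

lemma Ftr_eq: assumes x: "x > 0" shows "Ftr x (V x) = \<beta> / 2 * V x + \<gamma> * V x powr (\<gamma> - 1)"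
proof -
  have "\<phi> x \<le> V x"
  proof (cases "x \<le> \<delta>")
    case True then show ?thesis unfolding \<phi>_def using Vbnd[OF x True] by simp
  next
    case False
    then have "\<phi> x = exp (- \<eta>) * a * \<delta> powr \<beta>" unfolding \<phi>_def by simp
    also have "\<dots> \<le> V \<delta>" using Vbnd[OF \<delta> order.refl] by simp
    also have "\<dots> \<le> V x" using Vmono[OF \<delta>, of x] False by simp
    finally show ?thesis .
  qed
  then show ?thesis unfolding Ftr_def by (simp add: max_def)
qed

lemma Vode: assumes x: "x > 0"
  shows "V2 x + ((real n - 1) / (R + x) + (R + x) / 2) * V1 x - \<beta> / 2 * V x = \<gamma> * V x powr (\<gamma> - 1)"
  unfolding V2_def Ftr_eq[OF x] by simp

end

context ctxf
begin

definition "rat x = ln (V x / (a * x powr \<beta>))"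
definition "E d = max (- ln (\<rho> 0 / \<rho> d)) (\<beta> * exp \<eta> / 4 * d^2)"

lemma rat_exp: assumes x: "x > 0" shows "V x = exp (rat x) * a * x powr \<beta>"
proof -
  have "V x / (a * x powr \<beta>) > 0" using Vpos[OF x] apos x by simp
  then show ?thesis unfolding rat_def using apos x by (simp add: field_simps)
qed

lemma rat_bnd: assumes x: "x > 0" and M: "exp (- M) * a * x powr \<beta> \<le> V x" "V x \<le> exp M * a * x powr \<beta>"
  shows "\<bar>rat x\<bar> \<le> M"
proof -
  have p: "a * x powr \<beta> > 0" using apos x by simp
  have "exp (- M) \<le> exp (rat x)" "exp (rat x) \<le> exp M"
    using M rat_exp[OF x] p by (simp_all add: mult.assoc mult_le_cancel_right)
  then show ?thesis by auto
qed

lemma rat_eta: "0 < x \<Longrightarrow> x \<le> \<delta> \<Longrightarrow> \<bar>rat x\<bar> \<le> \<eta>"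
  using rat_bnd Vbnd by blast

lemma rat_main: assumes d: "0 < d" "d \<le> \<delta>" and x: "0 < x" "x \<le> d"
  shows "\<bar>rat x\<bar> \<le> E d / (1 - kk)"
proof -
  define Md where "Md = Sup ((\<lambda>t. \<bar>rat t\<bar>) ` {0<..d})"
  have bdd: "bdd_above ((\<lambda>t. \<bar>rat t\<bar>) ` {0<..d})" using rat_eta d by (auto intro!: bdd_aboveI[of _ \<eta>])
  have ne: "{0<..d} \<noteq> {}" using d by auto
  have le: "\<bar>rat t\<bar> \<le> Md" if "t \<in> {0<..d}" for t unfolding Md_def using bdd that by (intro cSup_upper) auto
  have Mdeta: "Md \<le> \<eta>" unfolding Md_def using ne rat_eta d by (intro cSup_least) auto
  have Md0: "0 \<le> Md" using le[of d] d by auto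
  have bnd: "exp (- Md) * a * t powr \<beta> \<le> V t \<and> V t \<le> exp Md * a * t powr \<beta>" if "0 < t" "t \<le> d" for t
  proof -
    have "\<bar>rat t\<bar> \<le> Md" using le that by auto
    then have "exp (- Md) \<le> exp (rat t)" "exp (rat t) \<le> exp Md" by auto
    moreover have "a * t powr \<beta> > 0" using apos that by simp
    ultimately show ?thesis using rat_exp[of t] that
      by (simp add: mult.assoc mult_right_mono)
  qed
  have key: "\<bar>rat y\<bar> \<le> kk * Md + E d" if y: "y \<in> {0<..d}" for y
  proof -
    have y': "0 < y" "y \<le> d" using y by auto
    note TS = TT_self[OF Vadm Md0 Mdeta d bnd y']
    have p: "a * y powr \<beta> > 0" using apos y' by simp
    have th: "\<rho> 0 / \<rho> d > 0" using \<rho>pos[of 0] \<rho>pos[of d] by simp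
    have Vy: "V y = exp (rat y) * (a * y powr \<beta>)" using rat_exp[OF y'(1)] by simp
    have lo: "\<rho> 0 / \<rho> d * exp (- (kk * Md)) \<le> exp (rat y)"
    proof -
      have "\<rho> 0 / \<rho> d * exp (- (kk * Md)) * a * y powr \<beta> \<le> V y" using TS(1) VTT[of y] y' by simp
      then have "(\<rho> 0 / \<rho> d * exp (- (kk * Md))) * (a * y powr \<beta>) \<le> exp (rat y) * (a * y powr \<beta>)"
        unfolding Vy by (simp only: mult.assoc)
      then show ?thesis using p by (rule mult_right_le_imp_le)
    qed
    have hi: "exp (rat y) \<le> exp (kk * Md) + \<beta> * exp Md * d^2 / 4"
    proof -
      have "V y \<le> (exp (kk * Md) + \<beta> * exp Md * d^2 / 4) * a * y powr \<beta>" using TS(2) VTT[of y] y' by simp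
      then have "exp (rat y) * (a * y powr \<beta>) \<le> (exp (kk * Md) + \<beta> * exp Md * d^2 / 4) * (a * y powr \<beta>)"
        unfolding Vy by (simp only: mult.assoc)
      then show ?thesis using p by (rule mult_right_le_imp_le)
    qed
    have "ln (\<rho> 0 / \<rho> d) - kk * Md \<le> rat y"
    proof -
      have "ln (\<rho> 0 / \<rho> d * exp (- (kk * Md))) \<le> ln (exp (rat y))" using lo th \<rho>pos[of 0] \<rho>pos[of d] by (subst ln_le_cancel_iff) auto
      then have "ln (\<rho> 0 / \<rho> d * exp (- (kk * Md))) \<le> rat y" by simp
      moreover have "ln (\<rho> 0 / \<rho> d * exp (- (kk * Md))) = ln (\<rho> 0 / \<rho> d) - kk * Md"
        using th by (subst ln_mult) auto
      ultimately show ?thesis by simp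
    qed
    moreover have "rat y \<le> kk * Md + \<beta> * exp \<eta> / 4 * d^2"
    proof -
      have "\<beta> * exp Md * d^2 / 4 \<le> \<beta> * exp \<eta> / 4 * d^2" using Mdeta \<beta>1 by (simp add: mult_right_mono)
      then have "exp (rat y) \<le> exp (kk * Md) + \<beta> * exp \<eta> / 4 * d^2" using hi by linarith
      also have "\<dots> \<le> exp (kk * Md) * (1 + \<beta> * exp \<eta> / 4 * d^2)"
      proof -
        have "1 \<le> exp (kk * Md)" using kk Md0 by simp
        moreover have "0 \<le> \<beta> * exp \<eta> / 4 * d^2" using \<beta>1 by simp
        ultimately have "1 * (\<beta> * exp \<eta> / 4 * d^2) \<le> exp (kk * Md) * (\<beta> * exp \<eta> / 4 * d^2)"
          by (intro mult_right_mono)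
        then show ?thesis by (simp add: algebra_simps)
      qed
      also have "\<dots> \<le> exp (kk * Md) * exp (\<beta> * exp \<eta> / 4 * d^2)"
        by (intro mult_left_mono) (auto simp: exp_ge_add_one_self)
      also have "\<dots> = exp (kk * Md + \<beta> * exp \<eta> / 4 * d^2)" by (simp add: exp_add)
      finally show ?thesis by simp
    qed
    ultimately show ?thesis unfolding E_def by (auto simp: abs_le_iff)
  qed
  have "Sup ((\<lambda>t. \<bar>rat t\<bar>) ` {0<..d}) \<le> kk * Md + E d" using ne key by (intro cSup_least) auto
  then have "Md \<le> kk * Md + E d" unfolding Md_def[symmetric] .
  then have "(1 - kk) * Md \<le> E d" by (simp add: algebra_simps)
  then have "Md \<le> E d / (1 - kk)" using kk by (simp add: field_simps)
  then show ?thesis using le[of x] x by auto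
qed

lemma rat_lim: "(rat \<longlongrightarrow> 0) (at_right 0)"
proof -
  have \<rho>c: "(\<rho> \<longlongrightarrow> \<rho> 0) (at_right 0)"
    using DERIV_isCont[OF \<rho>der[of 0]] R by (simp add: isCont_def filterlim_at_split)
  have "((\<lambda>d. E d / (1 - kk)) \<longlongrightarrow> max (- ln (\<rho> 0 / \<rho> 0)) (\<beta> * exp \<eta> / 4 * 0^2) / (1 - kk)) (at_right 0)"
    unfolding E_def using \<rho>pos[of 0] kk(2)
    by (intro tendsto_intros \<rho>c) auto
  moreover have "1 - kk \<noteq> 0" using kk(2) by simp
  ultimately have El: "((\<lambda>d. E d / (1 - kk)) \<longlongrightarrow> 0) (at_right 0)" using \<rho>pos[of 0] by simp
  have "((\<lambda>x. \<bar>rat x\<bar>) \<longlongrightarrow> 0) (at_right 0)"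
  proof (rule tendsto_sandwich[OF _ _ tendsto_const El])
    show "\<forall>\<^sub>F x in at_right 0. 0 \<le> \<bar>rat x\<bar>" by simp
    have "\<forall>\<^sub>F x in at_right (0::real). 0 < x \<and> x < \<delta>" unfolding eventually_at_right_field using \<delta> by (auto intro!: exI[of _ \<delta>])
    then show "\<forall>\<^sub>F x in at_right 0. \<bar>rat x\<bar> \<le> E x / (1 - kk)"
      by eventually_elim (use rat_main in auto)
  qed
  then show ?thesis by (simp add: tendsto_rabs_zero_iff)
qed

lemma Vlim: "((\<lambda>x. V x powr (1 / \<beta>) / x) \<longlongrightarrow> sqrt 2 / \<beta>) (at_right 0)"
proof -
  have "((\<lambda>x. (exp (rat x) * a) powr (1 / \<beta>)) \<longlongrightarrow> (exp 0 * a) powr (1 / \<beta>)) (at_right 0)"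
    using apos by (intro tendsto_intros rat_lim) auto
  moreover have "(exp 0 * a) powr (1 / \<beta>) = sqrt 2 / \<beta>"
    unfolding a_def using \<beta>1 by (simp add: powr_powr)
  moreover have "\<forall>\<^sub>F x in at_right 0. (exp (rat x) * a) powr (1 / \<beta>) = V x powr (1 / \<beta>) / x"
  proof -
    have "\<forall>\<^sub>F x in at_right (0::real). x > 0" by (rule eventually_at_right_less)
    then show ?thesis
    proof eventually_elim
      case (elim x)
      have "V x powr (1 / \<beta>) = (exp (rat x) * a) powr (1 / \<beta>) * (x powr \<beta>) powr (1 / \<beta>)"
        using rat_exp[OF elim] apos elim by (simp add: powr_mult mult.assoc)
      also have "(x powr \<beta>) powr (1 / \<beta>) = x" using elim \<beta>1 by (simp add: powr_powr)
      finally show ?case using elim by simp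
    qed
  qed
  ultimately show ?thesis by (simp add: tendsto_cong)
qed

end

context ctxb
begin

lemma Ac_eq: "Ac \<eta> / (\<beta> * (\<beta> - 1)) = kk * exp ((2 - \<gamma>) * \<eta>)"
proof (cases "\<gamma> = 0 \<or> \<gamma> = 1")
  case True then show ?thesis unfolding Ac_def kk_def using \<gamma>zero by auto
next
  case False
  then have g: "0 < \<gamma>" "\<gamma> < 1" using \<gamma>0 \<gamma>1 by auto
  have b: "\<beta> * (\<beta> - 1) > 0" using \<beta>gt1[OF g(1)] by simp
  have "(exp (- \<eta>) * a) powr (\<gamma> - 2) = exp ((2 - \<gamma>) * \<eta>) * a powr (\<gamma> - 2)"
  proof -
    have "(exp (- \<eta>) * a) powr (\<gamma> - 2) = exp (- \<eta>) powr (\<gamma> - 2) * a powr (\<gamma> - 2)" using apos by (simp add: powr_mult)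
    moreover have "exp (- \<eta>) powr (\<gamma> - 2) = exp ((2 - \<gamma>) * \<eta>)" by (simp add: powr_def algebra_simps)
    ultimately show ?thesis by simp
  qed
  moreover have "\<gamma> * a powr (\<gamma> - 2) = \<beta> * (\<beta> - 1)"
  proof -
    have "a powr (\<gamma> - 2) = a powr ((\<gamma> - 1) - 1)" by simp
    also have "\<dots> = a powr (\<gamma> - 1) / a powr 1" by (rule powr_diff)
    finally have "a powr (\<gamma> - 2) = a powr (\<gamma> - 1) / a" using apos by simp
    then have "\<gamma> * a powr (\<gamma> - 2) = (\<gamma> * a powr (\<gamma> - 1)) / a" by simp
    also have "\<dots> = (a * (\<beta> * (\<beta> - 1))) / a" using a\<gamma>[OF g(1)] by (simp add: mult.assoc)
    also have "\<dots> = \<beta> * (\<beta> - 1)" using apos by simp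
    finally show ?thesis .
  qed
  ultimately have "Ac \<eta> = (1 - \<gamma>) * exp ((2 - \<gamma>) * \<eta>) * (\<beta> * (\<beta> - 1))"
  proof -
    assume h1: "(exp (- \<eta>) * a) powr (\<gamma> - 2) = exp ((2 - \<gamma>) * \<eta>) * a powr (\<gamma> - 2)"
      and h2: "\<gamma> * a powr (\<gamma> - 2) = \<beta> * (\<beta> - 1)"
    have "Ac \<eta> = (1 - \<gamma>) * exp ((2 - \<gamma>) * \<eta>) * (\<gamma> * a powr (\<gamma> - 2))"
      unfolding Ac_def h1 by (simp only: mult_ac)
    then show ?thesis unfolding h2 .
  qed
  moreover have "\<beta> * (\<beta> - 1) \<noteq> 0" using b by (metis less_irrefl)
  ultimately show ?thesis unfolding kk_def using False by simp
qed

lemma params: "\<exists>\<eta> \<delta> K. ctxs n \<gamma> \<beta> R \<eta> \<delta> K"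
proof -
  define q where "q = (1 + kk) / 2"
  have q: "kk \<le> q" "q < 1" unfolding q_def using kk by auto
  define \<eta> where "\<eta> = (if kk = 0 then 1 else ln (q / kk) / 2)"
  have \<eta>: "\<eta> > 0" unfolding \<eta>_def using kk q by (auto simp: q_def)
  have \<eta>q: "kk * exp ((2 - \<gamma>) * \<eta>) \<le> q"
  proof (cases "kk = 0")
    case True then show ?thesis using q kk by simp
  next
    case False
    then have kp: "kk > 0" using kk by simp
    have "exp ((2 - \<gamma>) * \<eta>) \<le> exp (2 * \<eta>)" using \<eta> \<gamma>0 by (simp add: mult_right_mono)
    also have "exp (2 * \<eta>) = q / kk" unfolding \<eta>_def using False kp q by simp
    finally show ?thesis using kp by (simp add: field_simps)
  qed
  have c1: "exp (- (1 - kk) * \<eta>) < 1" using kk \<eta> by (simp add: mult_neg_pos)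
  have c2: "exp (kk * \<eta>) < exp \<eta>" using kk \<eta> by simp
  have \<rho>c: "((\<lambda>d. \<rho> 0 / \<rho> d) \<longlongrightarrow> \<rho> 0 / \<rho> 0) (at_right 0)"
  proof -
    have "(\<rho> \<longlongrightarrow> \<rho> 0) (at_right 0)"
      using DERIV_isCont[OF \<rho>der[of 0]] R by (simp add: isCont_def filterlim_at_split)
    then show ?thesis using \<rho>pos[of 0] by (intro tendsto_intros) auto
  qed
  have ev1: "\<forall>\<^sub>F d in at_right 0. exp (- (1 - kk) * \<eta>) < \<rho> 0 / \<rho> d"
  proof -
    have r1: "\<rho> 0 / \<rho> 0 = 1" using \<rho>pos[of 0] by simp
    show ?thesis using order_tendstoD(1)[OF \<rho>c[unfolded r1]] c1 by blast
  qed
  have ev2: "\<forall>\<^sub>F d in at_right 0. exp (kk * \<eta>) + \<beta> * exp \<eta> * d^2 / 4 < exp \<eta>"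
  proof -
    have "((\<lambda>d. exp (kk * \<eta>) + \<beta> * exp \<eta> * d^2 / 4) \<longlongrightarrow> exp (kk * \<eta>) + \<beta> * exp \<eta> * 0^2 / 4) (at_right 0)"
      by (intro tendsto_intros) auto
    then show ?thesis using order_tendstoD(2) c2 by fastforce
  qed
  have "\<forall>\<^sub>F d in at_right (0::real). 0 < d" by (rule eventually_at_right_less)
  then have "\<forall>\<^sub>F d in at_right (0::real). 0 < d \<and> exp (- (1 - kk) * \<eta>) < \<rho> 0 / \<rho> d \<and> exp (kk * \<eta>) + \<beta> * exp \<eta> * d^2 / 4 < exp \<eta>"
    using ev1 ev2 by eventually_elim auto
  then obtain b where b: "b > 0" "\<forall>y>0. y < b \<longrightarrow> 0 < y \<and> exp (- (1 - kk) * \<eta>) < \<rho> 0 / \<rho> y \<and> exp (kk * \<eta>) + \<beta> * exp \<eta> * y^2 / 4 < exp \<eta>"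
    unfolding eventually_at_right_field by auto
  then obtain \<delta> where \<delta>: "0 < \<delta>" "exp (- (1 - kk) * \<eta>) < \<rho> 0 / \<rho> \<delta>" "exp (kk * \<eta>) + \<beta> * exp \<eta> * \<delta>^2 / 4 < exp \<eta>"
  proof -
    have "0 < b / 2" "b / 2 < b" using b(1) by auto
    then show ?thesis using b(2) that by blast
  qed
  define B where "B = Bc \<eta> \<delta>"
  have B: "B \<ge> 0" unfolding B_def Bc_def using \<gamma>0 \<gamma>1 \<beta>1 by simp
  define K where "K = 1 + 2 * B / (1 - q)"
  have K: "K \<ge> 1" unfolding K_def using B q by simp
  have "B / K^2 \<le> B / K" using K B by (intro divide_left_mono) (auto simp: power2_eq_square)
  also have "B / K \<le> (1 - q) / 2"
  proof -
    have "2 * B / (1 - q) \<le> K" unfolding K_def by simp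
    then have "2 * B \<le> K * (1 - q)" using q by (simp add: divide_le_eq)
    then show ?thesis using K by (simp add: divide_le_eq field_simps)
  qed
  finally have BK: "B / K^2 \<le> (1 - q) / 2" .
  have "Ac \<eta> / (\<beta> * (\<beta> - 1)) + Bc \<eta> \<delta> / K^2 < 1"
  proof -
    have "kk * exp ((2 - \<gamma>) * \<eta>) + B / K^2 \<le> q + (1 - q) / 2" using \<eta>q BK by (rule add_mono)
    also have "\<dots> < 1" using q(2) by (simp add: field_simps)
    finally show ?thesis unfolding Ac_eq B_def .
  qed
  then have "ctxs n \<gamma> \<beta> R \<eta> \<delta> K"
    using \<eta> \<delta> K by unfold_locales auto
  then show ?thesis by blast
qed

end

theorem theorem6p1:
  fixes n :: nat and \<gamma> \<beta> :: real
  assumes "n \<ge> 1" and "0 \<le> \<gamma>" and "\<gamma> \<le> 1" and "\<beta> = 2 / (2 - \<gamma>)"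
  shows "\<forall>R::real. R > 0 \<longrightarrow>
    (\<exists>U U' U'' :: real \<Rightarrow> real.
       continuous_on {R..} U \<and>
       (\<forall>r>R. (U has_real_derivative U' r) (at r) \<and> (U' has_real_derivative U'' r) (at r)) \<and>
       continuous_on {R<..} U'' \<and>
       (\<forall>r>R. U r > 0) \<and> strict_mono_on {R<..} U \<and>
       (\<forall>r>R. U'' r + ((real n - 1) / r + r / 2) * U' r - \<beta> / 2 * U r
               = \<gamma> * U r powr (\<gamma> - 1)) \<and>
       U R = 0 \<and>
       ((\<lambda>r. U r powr (1 / \<beta>) / (r - R)) \<longlongrightarrow> sqrt 2 / \<beta>) (at_right R) \<and>
       (\<exists>c>0. ((\<lambda>r. U r / r powr \<beta>) \<longlongrightarrow> c) at_top))"
proof (intro allI impI)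
  fix R :: real assume R: "R > 0"
  interpret B: ctxb n \<gamma> \<beta> R using assms R by unfold_locales auto
  obtain \<eta> \<delta> K where "ctxs n \<gamma> \<beta> R \<eta> \<delta> K" using B.params by blast
  then interpret S: ctxs n \<gamma> \<beta> R \<eta> \<delta> K .
  obtain H where "H \<in> S.Sset" "S.Phi H = H" using S.fixpoint by blast
  then interpret F: ctxf n \<gamma> \<beta> R \<eta> \<delta> K H by unfold_locales
  define U where "U r = F.V (r - R)" for r
  define U' where "U' r = F.V1 (r - R)" for r
  define U'' where "U'' r = F.V2 (r - R)" for r
  have shift: "((\<lambda>r. f (r - R)) has_real_derivative f' (r - R)) (at r)"
    if "(f has_real_derivative f' (r - R)) (at (r - R))" for f f' :: "real \<Rightarrow> real" and r
  proof -
    have "((\<lambda>r. r - R) has_real_derivative 1) (at r)" by (auto intro!: derivative_eq_intros)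
    from DERIV_chain2[OF that this] show ?thesis by simp
  qed
  have d1: "(U has_real_derivative U' r) (at r)" if "r > R" for r
    unfolding U_def U'_def by (rule shift, rule F.Vder) (use that in simp)
  have d2: "(U' has_real_derivative U'' r) (at r)" if "r > R" for r
    unfolding U'_def U''_def by (rule shift, rule F.V1der) (use that in simp)
  have pos: "U r > 0" if "r > R" for r unfolding U_def using F.Vpos that by simp
  have mono: "U' r \<ge> 0" if "r > R" for r unfolding U'_def using F.V1pos[of "r - R"] that by simp
  have ode: "U'' r + ((real n - 1) / r + r / 2) * U' r - \<beta> / 2 * U r = \<gamma> * U r powr (\<gamma> - 1)" if "r > R" for r
    unfolding U_def U'_def U''_def using F.Vode[of "r - R"] that by simp
  have \<beta>1: "\<beta> \<ge> 1" by (rule B.\<beta>1)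
  show "\<exists>U U' U'' :: real \<Rightarrow> real.
       continuous_on {R..} U \<and>
       (\<forall>r>R. (U has_real_derivative U' r) (at r) \<and> (U' has_real_derivative U'' r) (at r)) \<and>
       continuous_on {R<..} U'' \<and>
       (\<forall>r>R. U r > 0) \<and> strict_mono_on {R<..} U \<and>
       (\<forall>r>R. U'' r + ((real n - 1) / r + r / 2) * U' r - \<beta> / 2 * U r
               = \<gamma> * U r powr (\<gamma> - 1)) \<and>
       U R = 0 \<and>
       ((\<lambda>r. U r powr (1 / \<beta>) / (r - R)) \<longlongrightarrow> sqrt 2 / \<beta>) (at_right R) \<and>
       (\<exists>c>0. ((\<lambda>r. U r / r powr \<beta>) \<longlongrightarrow> c) at_top)"
  proof (rule exI[of _ U], rule exI[of _ U'], rule exI[of _ U''], intro conjI allI impI)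
    show "continuous_on {R..} U" unfolding U_def
      by (rule continuous_on_compose2[OF F.Vcont]) (auto intro!: continuous_intros)
    show "continuous_on {R<..} U''" unfolding U''_def
      by (rule continuous_on_compose2[OF F.V2cont]) (auto intro!: continuous_intros)
    show "strict_mono_on {R<..} U" unfolding U_def
      by (rule strict_mono_onI) (use F.Vmono in auto)
    show "U R = 0" unfolding U_def using F.V0 by simp
    show "((\<lambda>r. U r powr (1 / \<beta>) / (r - R)) \<longlongrightarrow> sqrt 2 / \<beta>) (at_right R)"
      unfolding filterlim_at_right_to_0[of _ _ R] U_def using F.Vlim by simp
    show "\<exists>c>0. ((\<lambda>r. U r / r powr \<beta>) \<longlongrightarrow> c) at_top"
      by (rule asym[OF R \<beta>1 assms(2,3,1) d1 d2 pos mono ode])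
  qed (use d1 d2 pos ode in auto)
qed


end
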